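(* Fix $p\in(\tfrac12,1)$ and let $\{B_n\}_{n\ge1}$ be a sequence with $B_n\in\{1,\dots,n\}$ and $\lim_{n\to\infty}B_n/n=q$ for some $q\in[0,1]$. Then $$\lim_{n\to\infty}\lambda(B_n,n)=\begin{cases}0 & \text{if } q\le 1-p,\\ \dfrac{q-(1-p)}{p} & \text{otherwise.}\end{cases}$$
   Context: The crowdfunding game $\Gamma(B,n)$ with parameter $p\in(\tfrac12,1)$: there are $n$ players and a threshold $B\in\{1,\dots,n\}$. A state $\omega\in\{H,L\}$ is drawn with probability $\tfrac12$ each. Conditional on $\omega$, each player $i$ independently receives a signal $s_i\in\{H,L\}$ with $\Pr(s_i=\omega\mid\omega)=p$. Players simultaneously choose $a_i\in\{0,1\}$. Player $i$'s payoff is $1$ if $a_i=1$, $\sum_j a_j\ge B$ and $\omega=H$; $-1$ if $a_i=1$, $\sum_j a_j\ge B$ and $\omega=L$; and $0$ otherwise. A strategy is a map $\sigma_i:\{H,L\}\to[0,1]$ giving the probability of action $1$ after each signal; Bayes-Nash equilibrium is defined as usual. A profile is non-trivial if $\Pr_\sigma(\sum_i a_i\ge B)>0$, and symmetric if all players use the same strategy. It is known that each $\Gamma(B,n)$ has a unique symmetric non-trivial Bayes-Nash equilibrium, and in it every player plays $1$ with probability $1$ after signal $H$ and plays $1$ with probability $\lambda(B,n)\in[0,1)$ after signal $L$; this defines $\lambda(B,n)$. *)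

theory Defs
  imports "HOL-Analysis.Analysis"
begin

(* Crowdfunding game Gamma(B,n) with signal precision p.
   Encoding: states and signals are bool, True = H, False = L. A strategy profile is sg :: nat => bool => real,
   sg i s = probability that player i plays action 1 after signal s. *)

definition strat :: "(bool \<Rightarrow> real) \<Rightarrow> bool" where
  "strat f \<longleftrightarrow> (\<forall>s. 0 \<le> f s \<and> f s \<le> 1)"

definition cf_prob :: "real \<Rightarrow> nat \<Rightarrow> (nat \<Rightarrow> bool \<Rightarrow> real) \<Rightarrow> bool \<Rightarrow> (nat \<Rightarrow> bool) \<Rightarrow> (nat \<Rightarrow> bool) \<Rightarrow> real" where
  "cf_prob p n sg w s a =
     (1/2) * (\<Prod>i<n. if s i = w then p else 1 - p)
           * (\<Prod>i<n. if a i then sg i (s i) else 1 - sg i (s i))"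

definition cf_payoff :: "nat \<Rightarrow> nat \<Rightarrow> nat \<Rightarrow> bool \<Rightarrow> (nat \<Rightarrow> bool) \<Rightarrow> real" where
  "cf_payoff B n i w a =
     (if a i \<and> B \<le> card {j\<in>{..<n}. a j} then (if w then 1 else -1) else 0)"

definition profiles :: "nat \<Rightarrow> (nat \<Rightarrow> bool) set" where
  "profiles n = PiE {..<n} (\<lambda>_. UNIV)"

definition cf_EU :: "real \<Rightarrow> nat \<Rightarrow> nat \<Rightarrow> (nat \<Rightarrow> bool \<Rightarrow> real) \<Rightarrow> nat \<Rightarrow> real" where
  "cf_EU p B n sg i =
     (\<Sum>w\<in>UNIV. \<Sum>s\<in>profiles n. \<Sum>a\<in>profiles n.
        cf_prob p n sg w s a * cf_payoff B n i w a)"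

definition cf_BNE :: "real \<Rightarrow> nat \<Rightarrow> nat \<Rightarrow> (nat \<Rightarrow> bool \<Rightarrow> real) \<Rightarrow> bool" where
  "cf_BNE p B n sg \<longleftrightarrow>
     (\<forall>i<n. strat (sg i)) \<and>
     (\<forall>i<n. \<forall>t. strat t \<longrightarrow> cf_EU p B n (sg(i := t)) i \<le> cf_EU p B n sg i)"

definition cf_nontrivial :: "real \<Rightarrow> nat \<Rightarrow> nat \<Rightarrow> (nat \<Rightarrow> bool \<Rightarrow> real) \<Rightarrow> bool" where
  "cf_nontrivial p B n sg \<longleftrightarrow>
     (\<Sum>w\<in>UNIV. \<Sum>s\<in>profiles n. \<Sum>a\<in>{a\<in>profiles n. B \<le> card {j\<in>{..<n}. a j}}.
        cf_prob p n sg w s a) > 0"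

definition sym_nt_BNE :: "real \<Rightarrow> nat \<Rightarrow> nat \<Rightarrow> (bool \<Rightarrow> real) \<Rightarrow> bool" where
  "sym_nt_BNE p B n f \<longleftrightarrow>
     cf_BNE p B n (\<lambda>_. f) \<and> cf_nontrivial p B n (\<lambda>_. f)"

(* lambda(B,n): probability of action 1 after signal L in the (unique)
   symmetric non-trivial BNE *)
definition cf_lambda :: "real \<Rightarrow> nat \<Rightarrow> nat \<Rightarrow> real" where
  "cf_lambda p B n = (THE f. sym_nt_BNE p B n f) False"

end

theory Submission
  imports Defs "HOL-Probability.Hoeffding"
begin

lemma count_sum:
  fixes x y :: real and h :: "nat \<Rightarrow> real"
  assumes fin: "finite I"
  shows "(\<Sum>a\<in>PiE I (\<lambda>_. UNIV). (\<Prod>j\<in>I. if a j then x else y) * h (card {j\<in>I. a j}))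
        = (\<Sum>j\<le>card I. real (card I choose j) * x^j * y^(card I - j) * h j)"
proof -
  define \<tau> where "\<tau> = (\<lambda>S j. if j \<in> I then j \<in> S else undefined)"
  have bij: "bij_betw \<tau> (Pow I) (PiE I (\<lambda>_. UNIV))"
  proof (rule bij_betwI[where g = "\<lambda>a. {j\<in>I. a j}"])
    show "\<tau> \<in> Pow I \<rightarrow> PiE I (\<lambda>_. UNIV)" by (auto simp: \<tau>_def)
    show "(\<lambda>a. {j\<in>I. a j}) \<in> PiE I (\<lambda>_. UNIV) \<rightarrow> Pow I" by auto
    show "\<And>S. S \<in> Pow I \<Longrightarrow> {j\<in>I. \<tau> S j} = S" by (auto simp: \<tau>_def)
    show "\<And>a. a \<in> PiE I (\<lambda>_. UNIV) \<Longrightarrow> \<tau> {j\<in>I. a j} = a"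
      by (auto simp: \<tau>_def PiE_def extensional_def fun_eq_iff)
  qed
  have "(\<Sum>a\<in>PiE I (\<lambda>_. UNIV). (\<Prod>j\<in>I. if a j then x else y) * h (card {j\<in>I. a j}))
      = (\<Sum>S\<in>Pow I. (\<Prod>j\<in>I. if \<tau> S j then x else y) * h (card {j\<in>I. \<tau> S j}))"
    by (rule sum.reindex_bij_betw[OF bij, symmetric])
  also have "\<dots> = (\<Sum>S\<in>Pow I. x ^ card S * y ^ (card I - card S) * h (card S))"
  proof (rule sum.cong[OF refl])
    fix S assume S: "S \<in> Pow I"
    have fS: "finite S" using S fin finite_subset by auto
    have e1: "{j\<in>I. \<tau> S j} = S" using S by (auto simp: \<tau>_def)
    have "(\<Prod>j\<in>I. if \<tau> S j then x else y) = (\<Prod>j\<in>I. if j \<in> S then x else y)"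
      by (rule prod.cong) (auto simp: \<tau>_def)
    also have "\<dots> = (\<Prod>j\<in>I \<inter> {j. j\<in>S}. x) * (\<Prod>j\<in>I \<inter> - {j. j\<in>S}. y)"
      by (rule prod.If_cases[OF fin])
    also have "I \<inter> {j. j\<in>S} = S" using S by auto
    also have "I \<inter> - {j. j\<in>S} = I - S" by auto
    finally have "(\<Prod>j\<in>I. if \<tau> S j then x else y) = x ^ card S * y ^ (card I - card S)"
      using S fin by (simp add: card_Diff_subset fS)
    then show "(\<Prod>j\<in>I. if \<tau> S j then x else y) * h (card {j\<in>I. \<tau> S j})
        = x ^ card S * y ^ (card I - card S) * h (card S)" using e1 by simp
  qed
  also have "\<dots> = (\<Sum>j\<le>card I. \<Sum>S\<in>{S. S \<in> Pow I \<and> card S = j}. x ^ card S * y ^ (card I - card S) * h (card S))"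
    by (rule sum.group[symmetric]) (use fin card_mono in auto)
  also have "\<dots> = (\<Sum>j\<le>card I. real (card I choose j) * x^j * y^(card I - j) * h j)"
  proof (rule sum.cong[OF refl])
    fix j
    have "(\<Sum>S\<in>{S. S \<in> Pow I \<and> card S = j}. x ^ card S * y ^ (card I - card S) * h (card S))
        = (\<Sum>S\<in>{S. S \<subseteq> I \<and> card S = j}. x ^ j * y ^ (card I - j) * h j)"
      by (rule sum.cong) auto
    also have "\<dots> = real (card I choose j) * (x ^ j * y ^ (card I - j) * h j)"
      using n_subsets[OF fin, of j] by simp
    finally show "(\<Sum>S\<in>{S. S \<in> Pow I \<and> card S = j}. x ^ card S * y ^ (card I - card S) * h (card S))
        = real (card I choose j) * x^j * y^(card I - j) * h j" by simp
  qed
  finally show ?thesis .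
qed

definition Qb :: "nat \<Rightarrow> nat \<Rightarrow> real \<Rightarrow> real" where
  "Qb m k r = (\<Sum>j=k..m. real (m choose j) * r^j * (1-r)^(m-j))"

lemma PiE_split_sum:
  fixes F :: "(nat \<Rightarrow> bool) \<Rightarrow> real"
  assumes "i \<in> A"
  shows "(\<Sum>a\<in>PiE A (\<lambda>_. UNIV). F a) = (\<Sum>v\<in>UNIV. \<Sum>g\<in>PiE (A-{i}) (\<lambda>_. UNIV). F (g(i:=v)))"
proof -
  have A: "A = insert i (A - {i})" using assms by auto
  have "(\<Sum>a\<in>PiE A (\<lambda>_. UNIV). F a) = (\<Sum>a\<in>PiE (insert i (A-{i})) (\<lambda>_. UNIV). F a)"
    using A by simp
  also have "\<dots> = (\<Sum>a\<in>(\<lambda>(y, g). g(i := y)) ` (UNIV \<times> PiE (A-{i}) (\<lambda>_. UNIV)). F a)"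
    by (simp only: PiE_insert_eq)
  also have "\<dots> = (\<Sum>x\<in>UNIV \<times> PiE (A-{i}) (\<lambda>_. UNIV). F ((\<lambda>(y, g). g(i := y)) x))"
    by (rule sum.reindex[unfolded comp_def]) (rule inj_combinator[where T="\<lambda>_. UNIV", simplified], simp)
  also have "\<dots> = (\<Sum>v\<in>UNIV. \<Sum>g\<in>PiE (A-{i}) (\<lambda>_. UNIV). F (g(i:=v)))"
    by (simp add: sum.cartesian_product case_prod_beta')
  finally show ?thesis .
qed

lemma sum_s:
  fixes P :: "bool \<Rightarrow> real" and G :: "nat \<Rightarrow> bool \<Rightarrow> real"
  assumes "finite A"
  shows "(\<Sum>s\<in>PiE A (\<lambda>_. UNIV). (\<Prod>j\<in>A. P (s j)) * (\<Prod>j\<in>A. G j (s j)))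
     = (\<Prod>j\<in>A. \<Sum>x\<in>UNIV. P x * G j x)"
  by (subst prod_sum_PiE) (simp_all add: assms prod.distrib)

lemma split_main:
  fixes \<pi> :: "nat \<Rightarrow> bool \<Rightarrow> real" and c r :: real
  assumes i: "i < n" and B: "1 \<le> B"
    and pj: "\<And>j. j < n \<Longrightarrow> j \<noteq> i \<Longrightarrow> \<pi> j True = r \<and> \<pi> j False = 1 - r"
  shows "(\<Sum>a\<in>profiles n. (if a i \<and> B \<le> card {j\<in>{..<n}. a j} then c else 0) * (\<Prod>j<n. \<pi> j (a j)))
       = c * \<pi> i True * Qb (n-1) (B-1) r"
proof -
  let ?I = "{..<n} - {i}"
  have cI: "card ?I = n - 1" using i by simp
  have fI: "finite ?I" by simp
  have "(\<Sum>a\<in>profiles n. (if a i \<and> B \<le> card {j\<in>{..<n}. a j} then c else 0) * (\<Prod>j<n. \<pi> j (a j)))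
    = (\<Sum>v\<in>UNIV. \<Sum>g\<in>PiE ?I (\<lambda>_. UNIV). (if (g(i:=v)) i \<and> B \<le> card {j\<in>{..<n}. (g(i:=v)) j} then c else 0) * (\<Prod>j<n. \<pi> j ((g(i:=v)) j)))"
    unfolding profiles_def by (rule PiE_split_sum) (use i in simp)
  also have "\<dots> = (\<Sum>g\<in>PiE ?I (\<lambda>_. UNIV). c * \<pi> i True * ((\<Prod>j\<in>?I. if g j then r else 1 - r) * (if B - 1 \<le> card {j\<in>?I. g j} then 1 else 0)))"
  proof -
    have "(\<Sum>v\<in>UNIV. \<Sum>g\<in>PiE ?I (\<lambda>_. UNIV). (if (g(i:=v)) i \<and> B \<le> card {j\<in>{..<n}. (g(i:=v)) j} then c else 0) * (\<Prod>j<n. \<pi> j ((g(i:=v)) j)))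
      = (\<Sum>g\<in>PiE ?I (\<lambda>_. UNIV). (if B \<le> card {j\<in>{..<n}. (g(i:=True)) j} then c else 0) * (\<Prod>j<n. \<pi> j ((g(i:=True)) j)))"
      by (simp add: UNIV_bool)
    also have "\<dots> = (\<Sum>g\<in>PiE ?I (\<lambda>_. UNIV). c * \<pi> i True * ((\<Prod>j\<in>?I. if g j then r else 1 - r) * (if B - 1 \<le> card {j\<in>?I. g j} then 1 else 0)))"
    proof (rule sum.cong[OF refl])
      fix g
      have se: "{j\<in>{..<n}. (g(i:=True)) j} = insert i {j\<in>?I. g j}" using i by auto
      have cd: "card {j\<in>{..<n}. (g(i:=True)) j} = Suc (card {j\<in>?I. g j})"
        unfolding se by (subst card_insert_disjoint) auto
      have pr: "(\<Prod>j<n. \<pi> j ((g(i:=True)) j)) = \<pi> i True * (\<Prod>j\<in>?I. \<pi> j (g j))"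
      proof -
        have "(\<Prod>j<n. \<pi> j ((g(i:=True)) j)) = \<pi> i ((g(i:=True)) i) * (\<Prod>j\<in>?I. \<pi> j ((g(i:=True)) j))"
          by (rule prod.remove[where g="\<lambda>j. \<pi> j ((g(i:=True)) j)"]) (use i in auto)
        then have "(\<Prod>j<n. \<pi> j ((g(i:=True)) j)) = \<pi> i True * (\<Prod>j\<in>?I. \<pi> j ((g(i:=True)) j))"
          by simp
        also have "(\<Prod>j\<in>?I. \<pi> j ((g(i:=True)) j)) = (\<Prod>j\<in>?I. \<pi> j (g j))"
          by (rule prod.cong) auto
        finally show ?thesis .
      qed
      have pr2: "(\<Prod>j\<in>?I. \<pi> j (g j)) = (\<Prod>j\<in>?I. if g j then r else 1 - r)"
        by (rule prod.cong) (use pj in auto)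
      show "(if B \<le> card {j\<in>{..<n}. (g(i:=True)) j} then c else 0) * (\<Prod>j<n. \<pi> j ((g(i:=True)) j))
         = c * \<pi> i True * ((\<Prod>j\<in>?I. if g j then r else 1 - r) * (if B - 1 \<le> card {j\<in>?I. g j} then 1 else 0))"
        unfolding cd pr pr2 using B by auto
    qed
    finally show ?thesis .
  qed
  also have "\<dots> = c * \<pi> i True * (\<Sum>g\<in>PiE ?I (\<lambda>_. UNIV). (\<Prod>j\<in>?I. if g j then r else 1 - r) * (if B - 1 \<le> card {j\<in>?I. g j} then 1 else 0))"
    by (simp add: sum_distrib_left)
  also have "(\<Sum>g\<in>PiE ?I (\<lambda>_. UNIV). (\<Prod>j\<in>?I. if g j then r else 1 - r) * (if B - 1 \<le> card {j\<in>?I. g j} then 1 else 0))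
     = (\<Sum>j\<le>n-1. real (n-1 choose j) * r^j * (1-r)^(n-1 - j) * (if B - 1 \<le> j then 1 else 0))"
    using count_sum[OF fI, of r "1-r" "\<lambda>j. if B - 1 \<le> j then 1 else 0"] unfolding cI .
  also have "\<dots> = Qb (n-1) (B-1) r"
    unfolding Qb_def by (rule sum.mono_neutral_cong_right) auto
  finally show ?thesis .
qed

definition rT :: "real \<Rightarrow> (bool \<Rightarrow> real) \<Rightarrow> real" where
  "rT p f = p * f True + (1-p) * f False"
definition rF :: "real \<Rightarrow> (bool \<Rightarrow> real) \<Rightarrow> real" where
  "rF p f = (1-p) * f True + p * f False"

lemma EU_formula:
  assumes i: "i < n" and B: "1 \<le> B"
  shows "cf_EU p B n ((\<lambda>_. f)(i:=t)) i =
     1/2 * ((p * t True + (1-p) * t False) * Qb (n-1) (B-1) (rT p f)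
          - ((1-p) * t True + p * t False) * Qb (n-1) (B-1) (rF p f))"
proof -
  define sg where "sg = (\<lambda>_::nat. f)(i:=t)"
  define \<pi> where "\<pi> = (\<lambda>w j v. \<Sum>x\<in>(UNIV::bool set). (if x = w then p else 1-p) * (if v then sg j x else 1 - sg j x))"
  define rw where "rw = (\<lambda>w. if w then rT p f else rF p f)"
  have inner: "(\<Sum>s\<in>profiles n. \<Sum>a\<in>profiles n. cf_prob p n sg w s a * cf_payoff B n i w a)
     = (\<Sum>a\<in>profiles n. (if a i \<and> B \<le> card {j\<in>{..<n}. a j} then 1/2 * (if w then 1 else -1) else 0) * (\<Prod>j<n. \<pi> w j (a j)))" for w
  proof -
    have "(\<Sum>s\<in>profiles n. \<Sum>a\<in>profiles n. cf_prob p n sg w s a * cf_payoff B n i w a)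
        = (\<Sum>a\<in>profiles n. \<Sum>s\<in>profiles n. cf_prob p n sg w s a * cf_payoff B n i w a)"
      by (rule sum.swap)
    also have "\<dots> = (\<Sum>a\<in>profiles n. (if a i \<and> B \<le> card {j\<in>{..<n}. a j} then 1/2 * (if w then 1 else -1) else 0) * (\<Prod>j<n. \<pi> w j (a j)))"
    proof (rule sum.cong[OF refl])
      fix a
      have "(\<Sum>s\<in>profiles n. cf_prob p n sg w s a * cf_payoff B n i w a)
          = (1/2 * cf_payoff B n i w a) * (\<Sum>s\<in>PiE {..<n} (\<lambda>_. UNIV). (\<Prod>j<n. (\<lambda>x. if x = w then p else 1 - p) (s j)) * (\<Prod>j<n. (\<lambda>j x. if a j then sg j x else 1 - sg j x) j (s j)))"
        unfolding cf_prob_def profiles_def sum_distrib_left by (rule sum.cong) (auto simp: algebra_simps)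
      also have "\<dots> = (1/2 * cf_payoff B n i w a) * (\<Prod>j<n. \<pi> w j (a j))"
        by (subst sum_s) (simp_all add: \<pi>_def)
      finally have E: "(\<Sum>s\<in>profiles n. cf_prob p n sg w s a * cf_payoff B n i w a) = (1/2 * cf_payoff B n i w a) * (\<Prod>j<n. \<pi> w j (a j))" .
      show "(\<Sum>s\<in>profiles n. cf_prob p n sg w s a * cf_payoff B n i w a) =
         (if a i \<and> B \<le> card {j\<in>{..<n}. a j} then 1/2 * (if w then 1 else -1) else 0) * (\<Prod>j<n. \<pi> w j (a j))"
        unfolding E by (simp add: cf_payoff_def)
    qed
    finally show ?thesis .
  qed
  have pj: "\<pi> w j True = rw w \<and> \<pi> w j False = 1 - rw w" if "j \<noteq> i" for w j
    using that by (cases w) (auto simp: \<pi>_def rw_def sg_def rT_def rF_def UNIV_bool algebra_simps)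
  have outer: "(\<Sum>s\<in>profiles n. \<Sum>a\<in>profiles n. cf_prob p n sg w s a * cf_payoff B n i w a)
     = 1/2 * (if w then 1 else -1) * \<pi> w i True * Qb (n-1) (B-1) (rw w)" for w
    unfolding inner by (rule split_main[OF i B]) (use pj in auto)
  have "cf_EU p B n sg i = (\<Sum>w\<in>UNIV. 1/2 * (if w then 1 else -1) * \<pi> w i True * Qb (n-1) (B-1) (rw w))"
    unfolding cf_EU_def outer ..
  also have "\<dots> = 1/2 * ((p * t True + (1-p) * t False) * Qb (n-1) (B-1) (rT p f)
          - ((1-p) * t True + p * t False) * Qb (n-1) (B-1) (rF p f))"
    by (simp add: UNIV_bool \<pi>_def sg_def rw_def field_simps)
  finally show ?thesis unfolding sg_def .
qed

definition phi :: "nat \<Rightarrow> nat \<Rightarrow> real \<Rightarrow> real" where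
  "phi m k r = real k * real (m choose k) * r^(k-1) * (1-r)^(m-k)"

lemma Qb_0: "Qb m 0 r = 1"
proof -
  have "Qb m 0 r = (\<Sum>j\<le>m. real (m choose j) * r^j * (1-r)^(m-j))"
    unfolding Qb_def by (rule sum.cong) auto
  also have "\<dots> = (r + (1-r))^m" by (rule binomial_ring[symmetric])
  finally show ?thesis by simp
qed

lemma Qb_1: "k \<le> m \<Longrightarrow> Qb m k 1 = 1"
proof -
  assume km: "k \<le> m"
  have "Qb m k 1 = (\<Sum>j\<in>{k..m}. if j = m then 1 else 0)"
    unfolding Qb_def by (rule sum.cong) auto
  also have "\<dots> = 1" using km by simp
  finally show ?thesis .
qed

lemma Qb_nonneg: "0 \<le> r \<Longrightarrow> r \<le> 1 \<Longrightarrow> 0 \<le> Qb m k r"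
  unfolding Qb_def by (intro sum_nonneg) auto

lemma Qb_pos: assumes "k \<le> m" "0 < r" "r \<le> 1" shows "0 < Qb m k r"
proof -
  have "real (m choose m) * r^m * (1-r)^(m-m) \<le> Qb m k r"
    unfolding Qb_def by (rule member_le_sum) (use assms in auto)
  moreover have "0 < real (m choose m) * r^m * (1-r)^(m-m)" using assms by simp
  ultimately show ?thesis by linarith
qed

lemma Qb_le1: assumes "0 \<le> r" "r \<le> 1" shows "Qb m k r \<le> 1"
proof -
  have "Qb m k r \<le> (\<Sum>j\<le>m. real (m choose j) * r^j * (1-r)^(m-j))"
    unfolding Qb_def by (rule sum_mono2) (use assms in auto)
  also have "\<dots> = (r + (1-r))^m" by (rule binomial_ring[symmetric])
  finally show ?thesis by simp
qed

lemma term_deriv: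
  fixes r :: real
  shows "((\<lambda>r. real (m choose j) * r^j * (1-r)^(m-j)) has_real_derivative
     (real j * real (m choose j) * r^(j-1) * (1-r)^(m-j)
      - real (Suc j) * real (m choose Suc j) * r^(Suc j - 1) * (1-r)^(m - Suc j))) (at r)"
proof -
  have c: "real (Suc j) * real (m choose Suc j) = real (m - j) * real (m choose j)"
  proof -
    have "Suc j * (m choose Suc j) = (m - j) * (m choose j)"
      using binomial_absorption[of j m] binomial_absorb_comp[of m j] by simp
    then show ?thesis by (metis of_nat_mult)
  qed
  have c': "real (m choose j) * real (m - j) = real (m choose Suc j) + real j * real (m choose Suc j)"
    using c by (simp add: algebra_simps)
  show ?thesis
    by (rule derivative_eq_intros refl | simp)+
       (simp add: c' algebra_simps Suc_diff_Suc)
qed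

lemma Qb_deriv:
  assumes k1: "1 \<le> k" and km: "k \<le> m"
  shows "(Qb m k has_real_derivative phi m k r) (at r)"
proof -
  define T where "T = (\<lambda>j. real j * real (m choose j) * r^(j-1) * (1-r)^(m-j))"
  have "((\<lambda>r. \<Sum>j=k..m. real (m choose j) * r^j * (1-r)^(m-j)) has_real_derivative
      (\<Sum>j=k..m. T j - T (Suc j))) (at r)"
    unfolding T_def by (rule DERIV_sum) (rule term_deriv)
  moreover have "(\<Sum>j=k..m. T j - T (Suc j)) = T k"
  proof -
    have "(\<Sum>j=k..m. T j - T (Suc j)) = - (\<Sum>j=k..<Suc m. T (Suc j) - T j)"
      by (simp add: atLeastLessThanSuc_atLeastAtMost sum_negf[symmetric])
    also have "\<dots> = T k - T (Suc m)" using km by (subst sum_Suc_diff') auto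
    also have "T (Suc m) = 0" by (simp add: T_def)
    finally show ?thesis by simp
  qed
  ultimately show ?thesis unfolding Qb_def[abs_def] T_def phi_def by (simp add: fun_eq_iff)
qed

lemma Qb_cont: "continuous_on S (Qb m k)"
  unfolding Qb_def[abs_def] by (intro continuous_intros)

lemma phi_nonneg: "0 \<le> r \<Longrightarrow> r \<le> 1 \<Longrightarrow> 0 \<le> phi m k r"
  unfolding phi_def by simp

lemma phi_pos: "1 \<le> k \<Longrightarrow> k \<le> m \<Longrightarrow> 0 < r \<Longrightarrow> r < 1 \<Longrightarrow> 0 < phi m k r"
  unfolding phi_def by simp

lemma Qb_mono:
  assumes km: "k \<le> m" and r: "0 \<le> r1" "r1 \<le> r2" "r2 \<le> 1"
  shows "Qb m k r1 \<le> Qb m k r2"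
proof (cases "k = 0")
  case True then show ?thesis by (simp add: Qb_0)
next
  case False
  show ?thesis
  proof (rule DERIV_nonneg_imp_increasing_open[OF r(2)])
    fix x assume "r1 < x" "x < r2"
    then show "\<exists>y. (Qb m k has_real_derivative y) (at x) \<and> 0 \<le> y"
      using Qb_deriv[of k m x] False km r phi_nonneg[of x m k] by auto
  qed (rule Qb_cont)
qed

lemma pow_helper:
  fixes r :: real
  assumes "r \<noteq> 0"
  shows "real (k - 1) * r ^ (k - 1 - 1) = real (k - 1) * r ^ (k - 1) / r"
proof (cases "k \<le> 1")
  case True then show ?thesis by simp
next
  case False
  then have "k - 1 = Suc (k - 1 - 1)" by simp
  then have "r ^ (k - 1) = r * r ^ (k - 1 - 1)" by (metis power_Suc)
  then show ?thesis using assms by simp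
qed

lemma pow_helper2:
  fixes r :: real
  assumes "r \<noteq> 1"
  shows "real (m - k) * (1 - r) ^ (m - k - 1) = real (m - k) * (1 - r) ^ (m - k) / (1 - r)"
  using pow_helper[of "1 - r" "m - k + 1"] assms by simp

definition psi :: "nat \<Rightarrow> nat \<Rightarrow> real \<Rightarrow> real" where
  "psi m k r = real (k - 1) / r - real (m - k) / (1 - r)"

lemma phi_deriv:
  assumes r: "0 < r" "r < 1"
  shows "(phi m k has_real_derivative psi m k r * phi m k r) (at r)"
proof -
  have "(phi m k has_real_derivative
      real k * real (m choose k) * (real (k - 1) * r ^ (k - 1 - 1) * (1-r)^(m-k)
         - r^(k-1) * (real (m - k) * (1 - r) ^ (m - k - 1)))) (at r)"
    unfolding phi_def[abs_def]
    by (rule derivative_eq_intros refl | simp)+ (simp add: algebra_simps)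
  moreover have "real k * real (m choose k) * (real (k - 1) * r ^ (k - 1 - 1) * (1-r)^(m-k)
         - r^(k-1) * (real (m - k) * (1 - r) ^ (m - k - 1))) = psi m k r * phi m k r"
    using r by (subst pow_helper, simp, subst pow_helper2, simp) (simp add: psi_def phi_def field_simps)
  ultimately show ?thesis by simp
qed

lemma phi_cont: "continuous_on S (phi m k)"
  unfolding phi_def[abs_def] by (intro continuous_intros)

lemma Qb_at0: "1 \<le> k \<Longrightarrow> Qb m k 0 = 0"
  unfolding Qb_def by (intro sum.neutral) auto

lemma G_deriv:
  assumes k: "1 \<le> k" "k \<le> m" and r: "0 < r" "r < 1"
  shows "((\<lambda>r. phi m k r - psi m k r * Qb m k r) has_real_derivative
     (real (k-1) / r^2 + real (m-k) / (1-r)^2) * Qb m k r) (at r)"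
proof -
  have ps0: "(psi m k has_real_derivative (- (real (k-1) * inverse (r^2)) - real (m-k) * inverse ((1-r)^2))) (at r)"
    unfolding psi_def[abs_def] divide_inverse using r
    apply (intro derivative_eq_intros)
    apply (rule refl | simp)+
    apply (simp add: power2_eq_square inverse_mult_distrib)
    done
  have ps: "(psi m k has_real_derivative (- real (k-1) / r^2 - real (m-k) / (1-r)^2)) (at r)"
    using ps0 by (simp add: divide_inverse)
  have "((\<lambda>r. psi m k r * Qb m k r) has_real_derivative
     (- real (k-1) / r^2 - real (m-k) / (1-r)^2) * Qb m k r + phi m k r * psi m k r) (at r)"
    by (rule DERIV_mult[OF ps Qb_deriv[OF k]])
  then have "((\<lambda>r. phi m k r - psi m k r * Qb m k r) has_real_derivative
     psi m k r * phi m k r - ((- real (k-1) / r^2 - real (m-k) / (1-r)^2) * Qb m k r + phi m k r * psi m k r)) (at r)"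
    by (rule DERIV_diff[OF phi_deriv[OF r]])
  then show ?thesis by (simp add: algebra_simps)
qed

lemma G_nonneg:
  assumes k: "1 \<le> k" "k \<le> m" and r: "0 < r" "r < 1"
  shows "psi m k r * Qb m k r \<le> phi m k r"
proof -
  define G where "G = (\<lambda>r. phi m k r - psi m k r * Qb m k r)"
  define W where "W = (\<lambda>t. t * phi m k t - real (k-1) * Qb m k t)"
  define t0 :: real where "t0 = 1 / (real (m - k) + 2)"
  have t0: "0 < t0" "t0 < 1" "t0 * (real (m - k) + 1) \<le> 1" by (auto simp: t0_def field_simps)
  have Gd: "(G has_real_derivative (real (k-1) / x^2 + real (m-k) / (1-x)^2) * Qb m k x) (at x)"
    if "0 < x" "x < 1" for x unfolding G_def by (rule G_deriv[OF k that])
  have Gd_nonneg: "0 \<le> (real (k-1) / x^2 + real (m-k) / (1-x)^2) * Qb m k x" if "0 < x" "x < 1" for x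
    using that Qb_nonneg[of x m k] by simp
  have Gcont: "continuous_on {a..b} G" if "0 < a" "b < 1" for a b
  proof (rule continuous_at_imp_continuous_on, intro ballI)
    fix x assume "x \<in> {a..b}"
    then have "0 < x" "x < 1" using that by auto
    then show "isCont G x" by (rule DERIV_isCont[OF Gd])
  qed
  have small: "0 \<le> G t" if t: "0 < t" "t \<le> t0" for t
  proof -
    have "W 0 \<le> W t"
    proof (rule DERIV_nonneg_imp_increasing_open[where f=W and a=0 and b=t])
      show "0 \<le> t" using t by simp
      show "continuous_on {0..t} W" unfolding W_def by (intro continuous_intros phi_cont Qb_cont)
      fix x assume x: "0 < x" "x < t"
      then have x1: "x < 1" using t t0 by simp
      have d1: "((\<lambda>t. t * phi m k t) has_real_derivative 1 * phi m k x + (psi m k x * phi m k x) * x) (at x)"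
        by (rule DERIV_mult[OF DERIV_ident phi_deriv]) (use x x1 in auto)
      have d2: "((\<lambda>t. real (k-1) * Qb m k t) has_real_derivative real (k-1) * phi m k x) (at x)"
        by (rule DERIV_cmult[OF Qb_deriv[OF k]])
      have "(W has_real_derivative (1 * phi m k x + (psi m k x * phi m k x) * x) - real (k-1) * phi m k x) (at x)"
        unfolding W_def by (rule DERIV_diff[OF d1 d2])
      moreover have "0 \<le> (1 * phi m k x + (psi m k x * phi m k x) * x) - real (k-1) * phi m k x"
      proof -
        have e: "(1 * phi m k x + (psi m k x * phi m k x) * x) - real (k-1) * phi m k x
              = phi m k x * (1 - x * real (m - k) / (1 - x))"
          using x x1 by (simp add: psi_def field_simps)
        have "x * real (m - k) \<le> 1 - x"
        proof -
          have "x * (real (m - k) + 1) \<le> t0 * (real (m - k) + 1)"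
            by (rule mult_right_mono) (use x t in auto)
          then show ?thesis using t0 by (simp add: algebra_simps)
        qed
        then have "x * real (m - k) / (1 - x) \<le> 1" using x1 by (simp add: field_simps)
        then show ?thesis unfolding e using phi_nonneg[of x m k] x x1 by simp
      qed
      ultimately show "\<exists>y. (W has_real_derivative y) (at x) \<and> 0 \<le> y" by blast
    qed
    moreover have "W 0 = 0" unfolding W_def using Qb_at0[OF k(1)] by simp
    ultimately have W: "0 \<le> W t" by simp
    have t1: "t < 1" using t t0 by simp
    have "G t = W t / t + real (m - k) * Qb m k t / (1 - t)"
      unfolding G_def W_def psi_def using t t1 by (simp add: field_simps)
    moreover have "0 \<le> real (m - k) * Qb m k t / (1 - t)" using t t1 Qb_nonneg[of t m k] by simp
    ultimately show ?thesis using W t by simp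
  qed
  have "0 \<le> G r"
  proof (cases "r \<le> t0")
    case True then show ?thesis using small r by simp
  next
    case False
    have "G t0 \<le> G r"
    proof (rule DERIV_nonneg_imp_increasing_open[where f=G and a=t0 and b=r])
      show "t0 \<le> r" using False by simp
      show "continuous_on {t0..r} G" by (rule Gcont) (use t0 r in auto)
      fix x assume "t0 < x" "x < r"
      then show "\<exists>y. (G has_real_derivative y) (at x) \<and> 0 \<le> y"
        using Gd Gd_nonneg t0 r by (meson less_trans)
    qed
    then show ?thesis using small[of t0] t0 by simp
  qed
  then show ?thesis unfolding G_def by simp
qed

lemma logconc:
  assumes k: "1 \<le> k" "k \<le> m" and r: "0 < r1" "r1 \<le> r2" "r2 < 1"
  shows "phi m k r2 * Qb m k r1 \<le> phi m k r1 * Qb m k r2"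
proof -
  define h where "h = (\<lambda>r. phi m k r / Qb m k r)"
  have Qp: "0 < Qb m k x" if "0 < x" "x < 1" for x using Qb_pos[OF k(2)] that by simp
  have hd: "(h has_real_derivative (psi m k x * phi m k x * Qb m k x - phi m k x * phi m k x) / (Qb m k x)^2) (at x)"
    if x: "0 < x" "x < 1" for x
    unfolding h_def power2_eq_square
    by (rule DERIV_divide[OF phi_deriv[OF x] Qb_deriv[OF k]]) (use Qp[OF x] in simp)
  have "h r2 \<le> h r1"
  proof (rule DERIV_nonpos_imp_decreasing_open[where f=h and a=r1 and b=r2])
    show "r1 \<le> r2" by fact
    show "continuous_on {r1..r2} h"
    proof (rule continuous_at_imp_continuous_on, intro ballI)
      fix x assume "x \<in> {r1..r2}"
      then have "0 < x" "x < 1" using r by auto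
      then show "isCont h x" by (rule DERIV_isCont[OF hd])
    qed
    fix x assume x: "r1 < x" "x < r2"
    then have x': "0 < x" "x < 1" using r by auto
    have "psi m k x * phi m k x * Qb m k x - phi m k x * phi m k x
        = phi m k x * (psi m k x * Qb m k x - phi m k x)" by (simp add: algebra_simps)
    also have "\<dots> \<le> 0" using G_nonneg[OF k x'] phi_nonneg[of x m k] x'
      by (simp add: mult_nonneg_nonpos)
    finally have num: "psi m k x * phi m k x * Qb m k x - phi m k x * phi m k x \<le> 0" .
    show "\<exists>y. (h has_real_derivative y) (at x) \<and> y \<le> 0"
      by (rule exI[of _ "(psi m k x * phi m k x * Qb m k x - phi m k x * phi m k x) / (Qb m k x)^2"])
        (use hd[OF x'] num Qp[OF x'] in \<open>auto intro: divide_nonpos_pos\<close>)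
  qed
  then show ?thesis unfolding h_def using Qp[of r1] Qp[of r2] r
    by (simp add: divide_simps)
qed

definition gfun :: "real \<Rightarrow> nat \<Rightarrow> nat \<Rightarrow> real \<Rightarrow> real" where
  "gfun p m k b = (1-p) * Qb m k (p + (1-p)*b) - p * Qb m k (1 - p + p*b)"

definition Rfun :: "real \<Rightarrow> nat \<Rightarrow> nat \<Rightarrow> real \<Rightarrow> real" where
  "Rfun p m k b = Qb m k (1 - p + p*b) / Qb m k (p + (1-p)*b)"

lemma rng:
  fixes p x :: real
  assumes p: "1/2 < p" "p < 1" and x: "0 \<le> x" "x \<le> 1"
  shows "0 < p + (1-p)*x" "p + (1-p)*x \<le> 1" "0 < 1 - p + p*x" "1 - p + p*x \<le> 1"
    "1 - p + p*x \<le> p + (1-p)*x"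
    "x < 1 \<Longrightarrow> p + (1-p)*x < 1" "x < 1 \<Longrightarrow> 1 - p + p*x < 1"
proof -
  have h1: "0 \<le> (1-p)*x" "0 \<le> p*x" using p x by auto
  have h2: "(1-p)*x \<le> 1-p" "p*x \<le> p" using p x mult_left_le[of x "1-p"] mult_left_le[of x p] by auto
  have h3: "(1-p)*x \<le> p*x" using p x by (intro mult_right_mono) auto
  have h4: "0 \<le> (2*p-1)*(1-x)" using p x by simp
  have h5: "(2*p-1)*(1-x) = (p + (1-p)*x) - (1 - p + p*x)" by (simp add: algebra_simps)
  show "0 < p + (1-p)*x" "p + (1-p)*x \<le> 1" "0 < 1 - p + p*x" "1 - p + p*x \<le> 1"
    "1 - p + p*x \<le> p + (1-p)*x" using h1 h2 h4 h5 p by linarith+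
  show "x < 1 \<Longrightarrow> p + (1-p)*x < 1"
  proof -
    assume "x < 1"
    then have "(1-p)*x < (1-p)*1" using p by (intro mult_strict_left_mono) auto
    then show ?thesis by simp
  qed
  show "x < 1 \<Longrightarrow> 1 - p + p*x < 1" using p mult_strict_left_mono[of x 1 p] by simp
qed

lemma R_strict:
  assumes k: "1 \<le> k" "k \<le> m" and p: "1/2 < p" "p < 1" and b: "0 \<le> b1" "b1 < b2" "b2 \<le> 1"
  shows "Rfun p m k b1 < Rfun p m k b2"
proof (rule DERIV_pos_imp_increasing_open[where f="Rfun p m k" and a=b1 and b=b2])
  show "b1 < b2" by fact
  have QTpos: "0 < Qb m k (p + (1-p)*x)" if "0 \<le> x" "x \<le> 1" for x
  proof (rule Qb_pos[OF k(2)])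
    show "0 < p + (1-p)*x" using rng[OF p that] by simp
    show "p + (1-p)*x \<le> 1" using rng[OF p that] by simp
  qed
  show "continuous_on {b1..b2} (Rfun p m k)"
    unfolding Rfun_def[abs_def]
  proof (intro continuous_on_divide)
    show "continuous_on {b1..b2} (\<lambda>x. Qb m k (1 - p + p * x))"
      unfolding Qb_def by (intro continuous_intros)
    show "continuous_on {b1..b2} (\<lambda>x. Qb m k (p + (1 - p) * x))"
      unfolding Qb_def by (intro continuous_intros)
    show "\<forall>x\<in>{b1..b2}. Qb m k (p + (1 - p) * x) \<noteq> 0"
    proof
      fix x assume "x \<in> {b1..b2}"
      then have "0 \<le> x" "x \<le> 1" using b by auto
      then have "0 < Qb m k (p + (1 - p) * x)" by (rule QTpos)
      then show "Qb m k (p + (1 - p) * x) \<noteq> 0" by simp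
    qed
  qed
  fix x assume x: "b1 < x" "x < b2"
  then have x01: "0 < x" "x < 1" using b by auto
  define rT where "rT = p + (1-p)*x"
  define rF where "rF = 1 - p + p*x"
  have x01': "0 \<le> x" "x \<le> 1" using x01 by auto
  have rF: "0 < rF" "rF < 1" unfolding rF_def using rng[OF p x01'] x01 by auto
  have rT: "0 < rT" "rT < 1" unfolding rT_def using rng[OF p x01'] x01 by auto
  have rFT: "rF \<le> rT" unfolding rF_def rT_def using rng[OF p x01'] by auto
  have dF: "((\<lambda>x. Qb m k (1 - p + p*x)) has_real_derivative phi m k rF * p) (at x)"
    unfolding rF_def
    by (rule DERIV_chain2[OF Qb_deriv[OF k]]) (rule derivative_eq_intros refl | simp)+
  have dT: "((\<lambda>x. Qb m k (p + (1-p)*x)) has_real_derivative phi m k rT * (1-p)) (at x)"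
    unfolding rT_def
    by (rule DERIV_chain2[OF Qb_deriv[OF k]]) (rule derivative_eq_intros refl | simp)+
  have QT: "0 < Qb m k rT" using Qb_pos[OF k(2)] rT by simp
  have QF: "0 < Qb m k rF" using Qb_pos[OF k(2)] rF by simp
  have d: "(Rfun p m k has_real_derivative
      (phi m k rF * p * Qb m k rT - Qb m k rF * (phi m k rT * (1-p))) / (Qb m k rT * Qb m k rT)) (at x)"
    unfolding Rfun_def[abs_def] using DERIV_divide[OF dF dT] QT unfolding rT_def rF_def by simp
  have lc: "phi m k rT * Qb m k rF \<le> phi m k rF * Qb m k rT"
    by (rule logconc[OF k rF(1) rFT rT(2)])
  have pT: "0 < phi m k rT * Qb m k rF" using phi_pos[OF k rT] QF by simp
  have "(1-p) * (phi m k rT * Qb m k rF) < p * (phi m k rT * Qb m k rF)"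
    using pT p by (intro mult_strict_right_mono) auto
  also have "\<dots> \<le> p * (phi m k rF * Qb m k rT)" using lc p by simp
  finally have "0 < phi m k rF * p * Qb m k rT - Qb m k rF * (phi m k rT * (1-p))"
    by (simp add: algebra_simps)
  then show "\<exists>y. (Rfun p m k has_real_derivative y) (at x) \<and> 0 < y"
    using d QT by (intro exI[of _ "(phi m k rF * p * Qb m k rT - Qb m k rF * (phi m k rT * (1-p))) / (Qb m k rT * Qb m k rT)"] conjI) (auto intro!: divide_pos_pos)
qed

lemma gfun_R:
  assumes k: "k \<le> m" and p: "1/2 < p" "p < 1" and b: "0 \<le> b" "b \<le> 1"
  shows "gfun p m k b = Qb m k (p + (1-p)*b) * ((1-p) - p * Rfun p m k b)"
    and "0 < Qb m k (p + (1-p)*b)"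
proof -
  show Q: "0 < Qb m k (p + (1-p)*b)" using Qb_pos[OF k] rng[OF p b] by simp
  show "gfun p m k b = Qb m k (p + (1-p)*b) * ((1-p) - p * Rfun p m k b)"
    unfolding gfun_def Rfun_def using Q by (simp add: field_simps)
qed

lemma mono_sign:
  assumes k: "k \<le> m" and p: "1/2 < p" "p < 1" and b: "0 \<le> b1" "b1 < b2" "b2 \<le> 1"
    and g1: "gfun p m k b1 \<le> 0"
  shows "gfun p m k b2 < 0"
proof (cases "k = 0")
  case True then show ?thesis using p by (simp add: gfun_def Qb_0)
next
  case False
  then have k1: "1 \<le> k" by simp
  have b1: "0 \<le> b1" "b1 \<le> 1" and b2: "0 \<le> b2" "b2 \<le> 1" using b by auto
  have R: "Rfun p m k b1 < Rfun p m k b2" by (rule R_strict[OF k1 k p b])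
  have "(1-p) - p * Rfun p m k b1 \<le> 0"
    using g1 gfun_R[OF k p b1] by (simp add: mult_le_0_iff)
  moreover have "p * Rfun p m k b1 < p * Rfun p m k b2" using R p by simp
  ultimately have "(1-p) - p * Rfun p m k b2 < 0" by simp
  then show ?thesis using gfun_R[OF k p b2] by (simp add: mult_pos_neg)
qed

definition Pb :: "real \<Rightarrow> nat \<Rightarrow> nat \<Rightarrow> real \<Rightarrow> bool" where
  "Pb p m k b \<longleftrightarrow> 0 \<le> b \<and> b < 1 \<and> (gfun p m k b = 0 \<or> (b = 0 \<and> gfun p m k 0 \<le> 0))"

lemma Pb_gle: "Pb p m k b \<Longrightarrow> gfun p m k b \<le> 0"
  unfolding Pb_def by auto

lemma Pb_unique:
  assumes k: "k \<le> m" and p: "1/2 < p" "p < 1" and P1: "Pb p m k b1" and P2: "Pb p m k b2"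
  shows "b1 = b2"
proof (rule ccontr)
  assume "b1 \<noteq> b2"
  then consider "b1 < b2" | "b2 < b1" by linarith
  then show False
  proof cases
    case 1
    have "gfun p m k b2 < 0" by (rule mono_sign[OF k p _ 1 _ Pb_gle[OF P1]]) (use P1 P2 in \<open>auto simp: Pb_def\<close>)
    then show False using P2 1 P1 by (auto simp: Pb_def)
  next
    case 2
    have "gfun p m k b1 < 0" by (rule mono_sign[OF k p _ 2 _ Pb_gle[OF P2]]) (use P1 P2 in \<open>auto simp: Pb_def\<close>)
    then show False using P2 2 P1 by (auto simp: Pb_def)
  qed
qed

lemma gfun_cont: "continuous_on S (gfun p m k)"
  unfolding gfun_def[abs_def] Qb_def by (intro continuous_intros)

lemma Pb_exists:
  assumes k: "k \<le> m" and p: "1/2 < p" "p < 1"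
  shows "\<exists>b. Pb p m k b"
proof (cases "gfun p m k 0 \<le> 0")
  case True then show ?thesis by (auto simp: Pb_def intro!: exI[of _ 0])
next
  case False
  have g1: "gfun p m k 1 < 0" using p Qb_1[OF k] by (simp add: gfun_def)
  obtain b where b: "0 \<le> b" "b \<le> 1" "gfun p m k b = 0"
    using IVT2'[of "gfun p m k" 1 0 0] False g1 gfun_cont by auto
  have "b \<noteq> 1" using b g1 by auto
  then show ?thesis using b by (auto simp: Pb_def)
qed

lemma Pb_U:
  assumes k: "k \<le> m" and p: "1/2 < p" "p < 1" and P: "Pb p m k l"
    and b: "0 \<le> b" "b \<le> 1" and g: "gfun p m k b < 0"
  shows "l \<le> b"
proof (rule ccontr)
  assume "\<not> l \<le> b"
  then have bl: "b < l" by simp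
  have "gfun p m k l < 0" by (rule mono_sign[OF k p b(1) bl]) (use P g in \<open>auto simp: Pb_def\<close>)
  then show False using P bl b by (auto simp: Pb_def)
qed

lemma Pb_L:
  assumes k: "k \<le> m" and p: "1/2 < p" "p < 1" and P: "Pb p m k l"
    and b: "0 \<le> b" "b < 1" and g: "0 < gfun p m k b"
  shows "b < l"
proof (rule ccontr)
  assume "\<not> b < l"
  then consider "l = b" | "l < b" by linarith
  then show False
  proof cases
    case 1 then show False using P g by (auto simp: Pb_def)
  next
    case 2
    have "gfun p m k b < 0" by (rule mono_sign[OF k p _ 2 _ Pb_gle[OF P]]) (use P b in \<open>auto simp: Pb_def\<close>)
    then show False using g by simp
  qed
qed

lemma EU_lin:
  assumes i: "i < n" and B: "1 \<le> B"
  shows "cf_EU p B n ((\<lambda>_. f)(i:=t)) i =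
     1/2 * (t True * (p * Qb (n-1) (B-1) (rT p f) - (1-p) * Qb (n-1) (B-1) (rF p f))
          + t False * ((1-p) * Qb (n-1) (B-1) (rT p f) - p * Qb (n-1) (B-1) (rF p f)))"
  unfolding EU_formula[OF i B] by (simp add: algebra_simps)

lemma BNE_iff:
  assumes n: "1 \<le> n" and B: "1 \<le> B"
  shows "cf_BNE p B n (\<lambda>_. f) \<longleftrightarrow> strat f \<and>
    (\<forall>t. strat t \<longrightarrow>
       t True * (p * Qb (n-1) (B-1) (rT p f) - (1-p) * Qb (n-1) (B-1) (rF p f))
     + t False * ((1-p) * Qb (n-1) (B-1) (rT p f) - p * Qb (n-1) (B-1) (rF p f))
     \<le> f True * (p * Qb (n-1) (B-1) (rT p f) - (1-p) * Qb (n-1) (B-1) (rF p f))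
     + f False * ((1-p) * Qb (n-1) (B-1) (rT p f) - p * Qb (n-1) (B-1) (rF p f)))"
    (is "_ \<longleftrightarrow> strat f \<and> (\<forall>t. strat t \<longrightarrow> ?X t \<le> ?X f)")
proof -
  have e0: "(\<lambda>_::nat. f)(i:=f) = (\<lambda>_. f)" for i by (rule ext) simp
  have EU: "cf_EU p B n ((\<lambda>_. f)(i:=t)) i = 1/2 * ?X t" if "i < n" for i t
    by (rule EU_lin[OF that B])
  have EUf: "cf_EU p B n (\<lambda>_. f) i = 1/2 * ?X f" if "i < n" for i
    using EU[OF that, of f] by (simp only: e0)
  have n0: "0 < n" using n by simp
  have A: "(\<forall>i<n. Q) \<longleftrightarrow> Q" for Q using n0 by blast
  have "(\<forall>i<n. \<forall>t. strat t \<longrightarrow> cf_EU p B n ((\<lambda>_. f)(i := t)) i \<le> cf_EU p B n (\<lambda>_. f) i)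
      \<longleftrightarrow> (\<forall>i<n. \<forall>t. strat t \<longrightarrow> ?X t \<le> ?X f)"
  proof -
    have C: "(cf_EU p B n ((\<lambda>_. f)(i := t)) i \<le> cf_EU p B n (\<lambda>_. f) i) = (?X t \<le> ?X f)"
      if "i < n" for i t
      by (simp only: EU[OF that] EUf[OF that]) (rule mult_le_cancel_left_pos, simp)
    show ?thesis by (auto simp add: C)
  qed
  also have "\<dots> \<longleftrightarrow> (\<forall>t. strat t \<longrightarrow> ?X t \<le> ?X f)" unfolding A by simp
  finally show ?thesis unfolding cf_BNE_def A by simp
qed

lemma finite_profiles: "finite (profiles n)"
  unfolding profiles_def by (intro finite_PiE) auto

lemma cf_prob_nonneg:
  assumes "strat f" "0 \<le> p" "p \<le> 1"
  shows "0 \<le> cf_prob p n (\<lambda>_. f) w s a"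
  unfolding cf_prob_def using assms by (intro mult_nonneg_nonneg prod_nonneg) (auto simp: strat_def)

lemma triv:
  assumes B: "1 \<le> B" and f: "f True = 0" "f False = 0"
  shows "\<not> cf_nontrivial p B n (\<lambda>_. f)"
proof -
  have "cf_prob p n (\<lambda>_. f) w s a = 0" if "a \<in> profiles n" "B \<le> card {j\<in>{..<n}. a j}" for w s a
  proof -
    have "{j\<in>{..<n}. a j} \<noteq> {}"
    proof
      assume "{j\<in>{..<n}. a j} = {}"
      then have "card {j\<in>{..<n}. a j} = 0" by simp
      then show False using that(2) B by linarith
    qed
    then obtain j where j: "j < n" "a j" by auto
    have "(\<Prod>i<n. if a i then f (s i) else 1 - f (s i)) = 0"
    proof (rule prod_zero)
      have "f (s j) = 0" using f by (cases "s j") auto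
      then show "\<exists>i\<in>{..<n}. (if a i then f (s i) else 1 - f (s i)) = 0" using j by auto
    qed simp
    then show ?thesis unfolding cf_prob_def by simp
  qed
  then show ?thesis unfolding cf_nontrivial_def by simp
qed

lemma nontriv:
  assumes Bn: "B \<le> n" and f: "strat f" "f True = 1" and p: "0 < p" "p \<le> 1"
  shows "cf_nontrivial p B n (\<lambda>_. f)"
proof -
  define a0 where "a0 = (\<lambda>j::nat. if j < n then True else undefined)"
  have a0: "a0 \<in> profiles n" unfolding a0_def profiles_def by auto
  have ca: "card {j\<in>{..<n}. a0 j} = n" unfolding a0_def by simp
  let ?A = "{a\<in>profiles n. B \<le> card {j\<in>{..<n}. a j}}"
  have a0A: "a0 \<in> ?A" using a0 ca Bn by simp
  have fA: "finite ?A" using finite_profiles by simp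
  have nn: "0 \<le> cf_prob p n (\<lambda>_. f) w s a" for w s a using cf_prob_nonneg f p by simp
  have pos: "0 < cf_prob p n (\<lambda>_. f) True a0 a0"
  proof -
    have "(\<Prod>i<n. if a0 i = True then p else 1 - p) = p ^ n" unfolding a0_def by simp
    moreover have "(\<Prod>i<n. if a0 i then f (a0 i) else 1 - f (a0 i)) = 1" unfolding a0_def using f by simp
    ultimately show ?thesis unfolding cf_prob_def using p by simp
  qed
  have "cf_prob p n (\<lambda>_. f) True a0 a0 \<le> (\<Sum>a\<in>?A. cf_prob p n (\<lambda>_. f) True a0 a)"
    by (rule member_le_sum[OF a0A]) (use nn fA in auto)
  also have "\<dots> \<le> (\<Sum>s\<in>profiles n. \<Sum>a\<in>?A. cf_prob p n (\<lambda>_. f) True s a)"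
    by (rule member_le_sum[OF a0, where f="\<lambda>s. \<Sum>a\<in>?A. cf_prob p n (\<lambda>_. f) True s a"])
       (use nn finite_profiles in \<open>auto intro: sum_nonneg\<close>)
  also have "\<dots> \<le> (\<Sum>w\<in>UNIV. \<Sum>s\<in>profiles n. \<Sum>a\<in>?A. cf_prob p n (\<lambda>_. f) w s a)"
    by (rule member_le_sum[where f="\<lambda>w. \<Sum>s\<in>profiles n. \<Sum>a\<in>?A. cf_prob p n (\<lambda>_. f) w s a"])
       (use nn in \<open>auto intro!: sum_nonneg\<close>)
  finally show ?thesis unfolding cf_nontrivial_def using pos by linarith
qed

lemma char:
  assumes n: "1 \<le> n" and B: "1 \<le> B" and Bn: "B \<le> n" and p: "1/2 < p" "p < 1"
  shows "sym_nt_BNE p B n f \<longleftrightarrow> f True = 1 \<and> Pb p (n-1) (B-1) (f False)"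
proof -
  define m where "m = n - 1"
  define k where "k = B - 1"
  have km: "k \<le> m" unfolding k_def m_def using Bn by simp
  define QT where "QT = Qb m k (rT p f)"
  define QF where "QF = Qb m k (rF p f)"
  define DH where "DH = p * QT - (1-p) * QF"
  define DL where "DL = (1-p) * QT - p * QF"
  have BNE: "cf_BNE p B n (\<lambda>_. f) \<longleftrightarrow> strat f \<and>
      (\<forall>t. strat t \<longrightarrow> t True * DH + t False * DL \<le> f True * DH + f False * DL)"
    unfolding BNE_iff[OF n B] DH_def DL_def QT_def QF_def m_def k_def ..
  show ?thesis
  proof
    assume S: "sym_nt_BNE p B n f"
    then have bne: "cf_BNE p B n (\<lambda>_. f)" and nt: "cf_nontrivial p B n (\<lambda>_. f)"
      unfolding sym_nt_BNE_def by auto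
    have sf: "strat f" and ineq: "\<And>t. strat t \<Longrightarrow> t True * DH + t False * DL \<le> f True * DH + f False * DL"
      using bne unfolding BNE by auto
    define a where "a = f True"
    define b where "b = f False"
    have a01: "0 \<le> a" "a \<le> 1" and b01: "0 \<le> b" "b \<le> 1" using sf unfolding strat_def a_def b_def by auto
    have t1: "(1 - a) * DH \<le> 0"
      using ineq[of "\<lambda>s. if s then 1 else b"] b01 unfolding strat_def a_def b_def by (simp add: algebra_simps)
    have t2: "0 \<le> a * DH"
      using ineq[of "\<lambda>s. if s then 0 else b"] b01 unfolding strat_def a_def b_def by (simp add: algebra_simps)
    have t3: "(1 - b) * DL \<le> 0"
      using ineq[of "\<lambda>s. if s then a else 1"] a01 unfolding strat_def a_def b_def by (simp add: algebra_simps)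
    have t4: "0 \<le> b * DL"
      using ineq[of "\<lambda>s. if s then a else 0"] a01 unfolding strat_def a_def b_def by (simp add: algebra_simps)
    have DHpos: "a = 1" if "0 < DH"
    proof (rule ccontr)
      assume "a \<noteq> 1" then have "0 < 1 - a" using a01 by simp
      then have "0 < (1 - a) * DH" using that by simp
      then show False using t1 by simp
    qed
    have DHneg: "a = 0" if "DH < 0"
    proof (rule ccontr)
      assume "a \<noteq> 0" then have "0 < a" using a01 by simp
      then have "a * DH < 0" using that by (simp add: mult_pos_neg)
      then show False using t2 by simp
    qed
    have DLpos: "b = 1" if "0 < DL"
    proof (rule ccontr)
      assume "b \<noteq> 1" then have "0 < 1 - b" using b01 by simp
      then have "0 < (1 - b) * DL" using that by simp
      then show False using t3 by simp
    qed
    have DLneg: "b = 0" if "DL < 0"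
    proof (rule ccontr)
      assume "b \<noteq> 0" then have "0 < b" using b01 by simp
      then have "b * DL < 0" using that by (simp add: mult_pos_neg)
      then show False using t4 by simp
    qed
    have rTe: "rT p f = p * a + (1-p) * b" and rFe: "rF p f = (1-p) * a + p * b"
      unfolding rT_def rF_def a_def b_def by simp_all
    have pa: "0 \<le> p * a" "p * a \<le> p" "0 \<le> (1-p) * a" "(1-p) * a \<le> 1-p"
      using a01 p mult_left_le[of a p] mult_left_le[of a "1-p"] by auto
    have pb: "0 \<le> p * b" "p * b \<le> p" "0 \<le> (1-p) * b" "(1-p) * b \<le> 1-p"
      using b01 p mult_left_le[of b p] mult_left_le[of b "1-p"] by auto
    have rT01: "0 \<le> rT p f" "rT p f \<le> 1" unfolding rTe using pa pb by linarith+
    have rF01: "0 \<le> rF p f" "rF p f \<le> 1" unfolding rFe using pa pb by linarith+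
    have QT01: "0 \<le> QT" "QT \<le> 1" unfolding QT_def using rT01 Qb_nonneg Qb_le1 by auto
    have QF01: "0 \<le> QF" "QF \<le> 1" unfolding QF_def using rF01 Qb_nonneg Qb_le1 by auto
    have diff: "DH - DL = (2*p - 1) * (QT + QF)" unfolding DH_def DL_def by (simp add: algebra_simps)
    have "0 \<le> (2*p - 1) * (QT + QF)" using QT01 QF01 p by simp
    then have diffnn: "DL \<le> DH" using diff by linarith
    have ntab: "\<not> (a = 0 \<and> b = 0)" using triv[OF B, of f p n] nt unfolding a_def b_def by auto
    have both1: False if "a = 1" "b = 1" "0 \<le> DL \<or> DL = 0"
    proof -
      have "rT p f = 1" "rF p f = 1" unfolding rTe rFe using that by simp_all
      then have "QT = 1" "QF = 1" unfolding QT_def QF_def using Qb_1[OF km] by simp_all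
      then have "DL = 1 - 2*p" unfolding DL_def by simp
      then show False using that p by simp
    qed
    have DLle: "DL \<le> 0"
    proof (rule ccontr)
      assume "\<not> DL \<le> 0"
      then have "0 < DL" by simp
      then have "b = 1" "a = 1" using DLpos DHpos diffnn by auto
      then show False using both1 \<open>0 < DL\<close> by simp
    qed
    have a1: "a = 1"
    proof (cases "0 < DH")
      case True then show ?thesis by (rule DHpos)
    next
      case False
      show ?thesis
      proof (cases "DH < 0")
        case True
        then have "a = 0" by (rule DHneg)
        moreover have "b = 0" using DLneg True diffnn by simp
        ultimately show ?thesis using ntab by simp
      next
        case False
        then have DH0: "DH = 0" using \<open>\<not> 0 < DH\<close> by simp
        show ?thesis
        proof (cases "QT + QF = 0")
          case True
          then have "QT = 0" using QT01 QF01 by simp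
          then have "\<not> 0 < rT p f"
          proof -
            assume Q0: "QT = 0"
            show ?thesis
            proof
              assume "0 < rT p f"
              then have "0 < QT" unfolding QT_def using Qb_pos[OF km] rT01 by simp
              then show False using Q0 by simp
            qed
          qed
          then have "rT p f = 0" using rT01 by linarith
          then have "p * a + (1-p) * b = 0" using rTe by simp
          moreover have "0 \<le> p * a" "0 \<le> (1-p) * b" using a01 b01 p by simp_all
          ultimately have "p * a = 0" "(1-p) * b = 0" by linarith+
          then have "a = 0" "b = 0" using p by simp_all
          then show ?thesis using ntab by simp
        next
          case False
          then have "0 < QT + QF" using QT01 QF01 by simp
          then have "0 < (2*p - 1) * (QT + QF)" using p by simp
          then have "DL < 0" using diff DH0 by linarith
          then have b0: "b = 0" by (rule DLneg)
          have "rF p f \<le> rT p f" unfolding rTe rFe b0 using p a01 by (simp add: mult_right_mono)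
          then have "QF \<le> QT" unfolding QF_def QT_def by (rule Qb_mono[OF km rF01(1) _ rT01(2)])
          then have "(1-p) * QF \<le> (1-p) * QT" using p by (intro mult_left_mono) auto
          then have "(2*p - 1) * QT \<le> 0" using DH0 unfolding DH_def by (simp add: algebra_simps)
          then have "QT \<le> 0" using p by (simp add: mult_le_0_iff)
          then have "QT = 0" using QT01 by simp
          then have "QF = 0" using \<open>QF \<le> QT\<close> QF01 by simp
          then show ?thesis using \<open>QT = 0\<close> \<open>0 < QT + QF\<close> by simp
        qed
      qed
    qed
    have rTe1: "rT p f = p + (1-p) * b" and rFe1: "rF p f = 1 - p + p * b"
      unfolding rTe rFe a1 by simp_all
    have gDL: "gfun p m k b = DL" unfolding gfun_def DL_def QT_def QF_def rTe1 rFe1 ..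
    have Pbb: "Pb p m k b"
    proof (cases "DL < 0")
      case True
      then have "b = 0" by (rule DLneg)
      then show ?thesis using gDL True unfolding Pb_def by simp
    next
      case False
      then have DL0: "DL = 0" using DLle by simp
      have "b \<noteq> 1" using both1 a1 DL0 by auto
      then show ?thesis using gDL DL0 b01 unfolding Pb_def by simp
    qed
    show "f True = 1 \<and> Pb p (n-1) (B-1) (f False)" using a1 Pbb unfolding a_def b_def m_def k_def by simp
  next
    assume R: "f True = 1 \<and> Pb p (n-1) (B-1) (f False)"
    define b where "b = f False"
    have a1: "f True = 1" and P: "Pb p m k b" using R unfolding b_def m_def k_def by auto
    have b01: "0 \<le> b" "b < 1" using P unfolding Pb_def by auto
    have sf: "strat f" unfolding strat_def
    proof
      fix s show "0 \<le> f s \<and> f s \<le> 1" using a1 b01 unfolding b_def by (cases s) auto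
    qed
    have rTe1: "rT p f = p + (1-p) * b" and rFe1: "rF p f = 1 - p + p * b"
      unfolding rT_def rF_def a1 b_def by simp_all
    have gDL: "gfun p m k b = DL" unfolding gfun_def DL_def QT_def QF_def rTe1 rFe1 ..
    have b01': "0 \<le> b" "b \<le> 1" using b01 by auto
    have "QF \<le> QT" unfolding QF_def QT_def rTe1 rFe1
      by (rule Qb_mono[OF km]) (use rng[OF p b01'] in auto)
    moreover have "0 \<le> QF" unfolding QF_def rFe1 by (rule Qb_nonneg) (use rng[OF p b01'] in auto)
    ultimately have DHnn: "0 \<le> DH"
    proof -
      assume a: "QF \<le> QT" "0 \<le> QF"
      have "p * QF \<le> p * QT" using a p by (intro mult_left_mono) auto
      moreover have "(1-p) * QF \<le> p * QF" using a p by (intro mult_right_mono) auto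
      ultimately show ?thesis unfolding DH_def by linarith
    qed
    have "cf_BNE p B n (\<lambda>_. f)"
      unfolding BNE
    proof (intro conjI allI impI sf)
      fix t assume st: "strat t"
      have t01: "0 \<le> t True" "t True \<le> 1" "0 \<le> t False" using st unfolding strat_def by auto
      have "t True * DH \<le> DH" using t01 DHnn by (simp add: mult_left_le_one_le)
      moreover have "t False * DL \<le> b * DL"
      proof (cases "DL = 0")
        case True then show ?thesis by simp
      next
        case False
        then have "b = 0" "DL \<le> 0" using P gDL unfolding Pb_def by auto
        then show ?thesis using t01 by (simp add: mult_nonneg_nonpos)
      qed
      ultimately show "t True * DH + t False * DL \<le> f True * DH + f False * DL"
        using a1 unfolding b_def by simp
    qed
    moreover have "cf_nontrivial p B n (\<lambda>_. f)" by (rule nontriv[OF Bn sf a1]) (use p in auto)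
    ultimately show "sym_nt_BNE p B n f" unfolding sym_nt_BNE_def by simp
  qed
qed

lemma Qb_prob:
  assumes r: "0 \<le> r" "r \<le> 1"
  shows "Qb m k r = measure_pmf.prob (binomial_pmf m r) {x. k \<le> x}"
proof -
  have "measure_pmf.prob (binomial_pmf m r) {x. k \<le> x} = measure_pmf.prob (binomial_pmf m r) {k..m}"
    by (rule measure_prob_cong_0) (use r in auto)
  also have "\<dots> = (\<Sum>j\<in>{k..m}. pmf (binomial_pmf m r) j)"
    by (rule measure_measure_pmf_finite) simp
  also have "\<dots> = Qb m k r" unfolding Qb_def using r by simp
  finally show ?thesis ..
qed

lemma Q_upper:
  assumes m: "0 < m" and r: "0 \<le> r" "r \<le> 1" and d: "0 \<le> d" and k: "real m * (r + d) \<le> real k"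
  shows "Qb m k r \<le> exp (-2 * real m * d^2)"
proof -
  have BD: "binomial_distribution r" by unfold_locales (use r in auto)
  have "Qb m k r = measure_pmf.prob (binomial_pmf m r) {x. k \<le> x}" by (rule Qb_prob[OF r])
  also have "\<dots> \<le> measure_pmf.prob (binomial_pmf m r) {x. real x / real m \<ge> r + d}"
  proof (rule measure_pmf.finite_measure_mono)
    show "{x. k \<le> x} \<subseteq> {x. real x / real m \<ge> r + d}"
    proof
      fix x assume "x \<in> {x. k \<le> x}"
      then have "real m * (r + d) \<le> real x" using k by (simp add: order_trans)
      then show "x \<in> {x. real x / real m \<ge> r + d}" using m by (simp add: field_simps)
    qed
  qed simp
  also have "\<dots> \<le> exp (real_of_int (- 2 * int m) * d^2)" by (rule binomial_distribution.prob_ge'[OF BD m d])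
  also have "\<dots> = exp (-2 * real m * d^2)" by simp
  finally show ?thesis .
qed

lemma Q_lower:
  assumes m: "0 < m" and r: "0 \<le> r" "r \<le> 1" and d: "0 \<le> d" and k: "real k \<le> real m * (r - d)"
  shows "1 - exp (-2 * real m * d^2) \<le> Qb m k r"
proof -
  have BD: "binomial_distribution r" by unfold_locales (use r in auto)
  have "measure_pmf.prob (binomial_pmf m r) {x. x < k} \<le> measure_pmf.prob (binomial_pmf m r) {x. real x / real m \<le> r - d}"
  proof (rule measure_pmf.finite_measure_mono)
    show "{x. x < k} \<subseteq> {x. real x / real m \<le> r - d}"
    proof
      fix x assume "x \<in> {x. x < k}"
      then have "real x \<le> real m * (r - d)" using k by simp
      then show "x \<in> {x. real x / real m \<le> r - d}" using m by (simp add: field_simps)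
    qed
  qed simp
  also have "\<dots> \<le> exp (real_of_int (- 2 * int m) * d^2)" by (rule binomial_distribution.prob_le'[OF BD m d])
  also have "\<dots> = exp (-2 * real m * d^2)" by simp
  finally have A: "measure_pmf.prob (binomial_pmf m r) {x. x < k} \<le> exp (-2 * real m * d^2)" .
  have "measure_pmf.prob (binomial_pmf m r) {x. k \<le> x} = 1 - measure_pmf.prob (binomial_pmf m r) {x. x < k}"
  proof -
    have "{x. k \<le> x} = UNIV - {x. x < k}" by auto
    moreover have "UNIV - {x. x < k} = space (measure_pmf (binomial_pmf m r)) - {x. x < k}" by simp
    moreover have "measure_pmf.prob (binomial_pmf m r) (space (measure_pmf (binomial_pmf m r)) - {x. x < k})
        = 1 - measure_pmf.prob (binomial_pmf m r) {x. x < k}"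
      by (rule measure_pmf.prob_compl) simp
    ultimately show ?thesis by (simp only:)
  qed
  then show ?thesis using A Qb_prob[OF r, of m k] by simp
qed

lemma Q_ratio:
  assumes r: "0 < r1" "r1 \<le> r2" "r2 < 1"
  shows "Qb m k r1 \<le> (r1/r2)^k * ((1-r1)/(1-r2))^(m-k) * Qb m k r2"
proof -
  define c where "c = (r1/r2)^k * ((1-r1)/(1-r2))^(m-k)"
  have "Qb m k r1 \<le> (\<Sum>j=k..m. c * (real (m choose j) * r2^j * (1-r2)^(m-j)))"
    unfolding Qb_def
  proof (rule sum_mono)
    fix j assume j: "j \<in> {k..m}"
    have r2p: "0 < r2" "0 < 1 - r2" using r by auto
    have "r1^j = (r1/r2)^j * r2^j" using r2p by (simp add: power_divide)
    moreover have "(1-r1)^(m-j) = ((1-r1)/(1-r2))^(m-j) * (1-r2)^(m-j)" using r2p by (simp add: power_divide)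
    moreover have "(r1/r2)^j \<le> (r1/r2)^k" using r j by (intro power_decreasing) auto
    moreover have "((1-r1)/(1-r2))^(m-j) \<le> ((1-r1)/(1-r2))^(m-k)" using r j
      by (intro power_increasing) (auto simp: field_simps)
    ultimately have le: "(r1/r2)^j * ((1-r1)/(1-r2))^(m-j) \<le> c" and
      eq: "r1^j * (1-r1)^(m-j) = ((r1/r2)^j * ((1-r1)/(1-r2))^(m-j)) * (r2^j * (1-r2)^(m-j))"
      unfolding c_def using r r2p by (auto intro!: mult_mono)
    have "r1^j * (1-r1)^(m-j) \<le> c * (r2^j * (1-r2)^(m-j))"
      unfolding eq by (rule mult_right_mono[OF le]) (use r2p in simp)
    then have "real (m choose j) * (r1^j * (1-r1)^(m-j)) \<le> real (m choose j) * (c * (r2^j * (1-r2)^(m-j)))"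
      by (rule mult_left_mono) simp
    then show "real (m choose j) * r1^j * (1-r1)^(m-j) \<le> c * (real (m choose j) * r2^j * (1-r2)^(m-j))"
      by (simp add: mult_ac)
  qed
  also have "\<dots> = c * Qb m k r2" unfolding Qb_def by (simp add: sum_distrib_left)
  finally show ?thesis unfolding c_def .
qed

lemma lambda_P:
  assumes n: "1 \<le> n" and B: "1 \<le> B" "B \<le> n" and p: "1/2 < p" "p < 1"
  shows "Pb p (n-1) (B-1) (cf_lambda p B n)"
proof -
  have km: "B - 1 \<le> n - 1" using B by simp
  obtain b where b: "Pb p (n-1) (B-1) b" using Pb_exists[OF km p] by blast
  define f0 where "f0 = (\<lambda>s::bool. if s then 1 else b)"
  have f0T: "f0 True = 1" and f0F: "f0 False = b" unfolding f0_def by simp_all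
  have S0: "sym_nt_BNE p B n f0"
    by (rule char[OF n B p, THEN iffD2]) (use f0T f0F b in simp)
  have U: "f = f0" if S: "sym_nt_BNE p B n f" for f
  proof -
    have c: "f True = 1 \<and> Pb p (n-1) (B-1) (f False)" by (rule char[OF n B p, THEN iffD1, OF S])
    have fF: "f False = b" by (rule Pb_unique[OF km p _ b]) (use c in simp)
    show ?thesis
    proof (rule ext)
      fix s show "f s = f0 s" using c fF f0T f0F by (cases s) simp_all
    qed
  qed
  have "(THE f. sym_nt_BNE p B n f) = f0"
    by (rule the_equality[where P="\<lambda>f. sym_nt_BNE p B n f"]) (rule S0, rule U)
  then have "cf_lambda p B n = f0 False" unfolding cf_lambda_def by (simp only:)
  then show ?thesis using b f0F by simp
qed

lemma ev_k_le:
  fixes Bs :: "nat \<Rightarrow> nat"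
  assumes lim: "(\<lambda>n. real (Bs n) / real n) \<longlonglongrightarrow> q" and qc: "q < c"
  shows "\<exists>N. \<forall>n\<ge>N. real (Bs n - 1) \<le> real (n-1) * c"
proof -
  define e where "e = (c - q) / 2"
  have e: "0 < e" using qc by (simp add: e_def)
  obtain N1 where N1: "\<forall>n\<ge>N1. norm (real (Bs n) / real n - q) < e" using LIMSEQ_D[OF lim e] by blast
  define N where "N = max (Suc N1) (nat \<lceil>c / e\<rceil> + 1)"
  have "real (Bs n - 1) \<le> real (n-1) * c" if n: "n \<ge> N" for n
  proof -
    have n1: "n \<ge> 1" "n \<ge> N1" using n by (auto simp: N_def)
    have "real (Bs n) / real n < q + e" using N1 n1 by auto
    then have "real (Bs n) < real n * (q + e)" using n1 by (simp add: field_simps)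
    moreover have "real (Bs n - 1) \<le> real (Bs n)" by simp
    moreover have "c / e \<le> real n"
    proof -
      have "c / e \<le> real (nat \<lceil>c / e\<rceil>)" by linarith
      also have "real (nat \<lceil>c / e\<rceil>) \<le> real n" using n unfolding N_def by linarith
      finally show ?thesis .
    qed
    then have "c \<le> real n * e" using e by (simp add: field_simps)
    then have "real n * (q + e) \<le> (real n - 1) * c" unfolding e_def by (simp add: field_simps)
    moreover have "real (n - 1) = real n - 1" using n1 by simp
    ultimately show ?thesis by simp
  qed
  then show ?thesis by blast
qed

lemma ev_k_ge:
  fixes Bs :: "nat \<Rightarrow> nat"
  assumes lim: "(\<lambda>n. real (Bs n) / real n) \<longlonglongrightarrow> q" and qc: "c < q" and c0: "0 \<le> c"
    and B1: "\<And>n. n \<ge> 1 \<Longrightarrow> 1 \<le> Bs n"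
  shows "\<exists>N. \<forall>n\<ge>N. real (n-1) * c \<le> real (Bs n - 1)"
proof -
  define e where "e = (q - c) / 2"
  have e: "0 < e" using qc by (simp add: e_def)
  obtain N1 where N1: "\<forall>n\<ge>N1. norm (real (Bs n) / real n - q) < e" using LIMSEQ_D[OF lim e] by blast
  define N where "N = max (Suc N1) (nat \<lceil>1 / e\<rceil> + 1)"
  have "real (n-1) * c \<le> real (Bs n - 1)" if n: "n \<ge> N" for n
  proof -
    have n1: "n \<ge> 1" "n \<ge> N1" using n by (auto simp: N_def)
    have "q - e < real (Bs n) / real n" using N1 n1 by auto
    then have "real n * (q - e) < real (Bs n)" using n1 by (simp add: field_simps)
    moreover have "real (Bs n - 1) = real (Bs n) - 1" using B1[OF n1(1)] by simp
    moreover have "1 / e \<le> real n"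
    proof -
      have "1 / e \<le> real (nat \<lceil>1 / e\<rceil>)" by linarith
      also have "real (nat \<lceil>1 / e\<rceil>) \<le> real n" using n unfolding N_def by linarith
      finally show ?thesis .
    qed
    then have "1 \<le> real n * e" using e by (simp add: field_simps)
    then have "(real n - 1) * c \<le> real n * (q - e) - 1" unfolding e_def using c0
      by (simp add: field_simps)
    moreover have "real (n - 1) = real n - 1" using n1 by simp
    ultimately show ?thesis by simp
  qed
  then show ?thesis by blast
qed

lemma ev_exp:
  assumes d: "0 < d" and eta: "0 < \<eta>"
  shows "\<exists>N. \<forall>n\<ge>N. exp (-2 * real (n-1) * d^2) < \<eta>"
proof -
  define N where "N = nat \<lceil>1 / (\<eta> * 2 * d^2)\<rceil> + 2"
  have "exp (-2 * real (n-1) * d^2) < \<eta>" if n: "n \<ge> N" for n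
  proof -
    define x where "x = 2 * real (n-1) * d^2"
    have x0: "0 \<le> x" unfolding x_def by simp
    have "1 / (\<eta> * 2 * d^2) \<le> real (nat \<lceil>1 / (\<eta> * 2 * d^2)\<rceil>)" by linarith
    also have "\<dots> < real (n - 1)" using n by (simp add: N_def)
    finally have "1 / (\<eta> * 2 * d^2) < real (n-1)" .
    moreover have pos: "0 < \<eta> * 2 * d^2" using d eta by simp
    have rn: "real (n-1) = real n - 1" using n by (simp add: N_def)
    ultimately have "1 < real (n-1) * (\<eta> * 2 * d^2)" using rn pos by (simp add: divide_less_eq)
    moreover have "\<eta> * x = real (n-1) * (\<eta> * 2 * d^2)" unfolding x_def by (simp only: mult_ac)
    ultimately have "1 < \<eta> * x" by linarith
    moreover have "\<eta> * x < \<eta> * (1 + x)" using eta by simp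
    ultimately have "1 < \<eta> * (1 + x)" by linarith
    then have "1 / (1 + x) < \<eta>" using x0 by (simp add: field_simps)
    moreover have "exp (-x) \<le> 1 / (1 + x)"
    proof -
      have "1 + x \<le> exp x" by (rule exp_ge_add_one_self)
      then have "1 / exp x \<le> 1 / (1 + x)" using x0 by (intro divide_left_mono) auto
      then show ?thesis by (simp add: exp_minus field_simps)
    qed
    ultimately show ?thesis unfolding x_def by simp
  qed
  then show ?thesis by blast
qed

lemma ev_ratio:
  fixes Bs :: "nat \<Rightarrow> nat" and \<rho> \<sigma> \<eta> :: real
  assumes lim: "(\<lambda>n. real (Bs n) / real n) \<longlonglongrightarrow> 1"
    and B1: "\<And>n. n \<ge> 1 \<Longrightarrow> 1 \<le> Bs n \<and> Bs n \<le> n"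
    and r: "0 < \<rho>" "\<rho> < 1" and s: "1 \<le> \<sigma>" and eta: "0 < \<eta>"
  shows "\<exists>N. \<forall>n\<ge>N. \<rho>^(Bs n - 1) * \<sigma>^((n-1) - (Bs n - 1)) < \<eta>"
proof -
  have pz: "(\<lambda>n. \<rho>^n) \<longlonglongrightarrow> 0" by (rule LIMSEQ_power_zero) (use r in simp)
  obtain N where N: "\<rho>^N < 1/\<sigma>" using LIMSEQ_D[OF pz, of "1/\<sigma>"] s r by fastforce
  have NS: "\<rho>^N * \<sigma> \<le> 1" using N s by (simp add: field_simps)
  obtain E where E: "\<rho>^E < \<eta>" using LIMSEQ_D[OF pz, of \<eta>] eta r by fastforce
  define e :: real where "e = 1 / (2 * (real N + 1))"
  have e: "0 < e" by (simp add: e_def)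
  obtain N1 where N1: "\<forall>n\<ge>N1. norm (real (Bs n) / real n - 1) < e" using LIMSEQ_D[OF lim e] by blast
  have "\<rho>^(Bs n - 1) * \<sigma>^((n-1) - (Bs n - 1)) < \<eta>" if n: "n \<ge> max N1 (2*E+2)" for n
  proof -
    have n1: "n \<ge> 1" "n \<ge> N1" "n \<ge> 2*E+2" using n by auto
    have Bn: "1 \<le> Bs n" "Bs n \<le> n" using B1[OF n1(1)] by auto
    define d where "d = n - Bs n"
    define k where "k = Bs n - 1"
    have dk: "(n-1) - (Bs n - 1) = d" "k = n - 1 - d" using Bn unfolding d_def k_def by auto
    have "1 - real (Bs n) / real n < e" using N1 n1 by auto
    then have "real n - real (Bs n) < e * real n" using n1 by (simp add: field_simps)
    then have "real d < real n / (2 * (real N + 1))" using Bn unfolding d_def e_def by (simp add: of_nat_diff)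
    then have "real d * (2 * (real N + 1)) < real n" by (simp add: field_simps)
    then have "real (2 * (N * d + d)) < real n" by (simp add: algebra_simps)
    then have dd: "2 * (N * d + d) < n" by linarith
    define t where "t = N * d"
    have dd': "2 * (t + d) < n" using dd unfolding t_def .
    have tk: "t \<le> k"
    proof -
      have "t + (1 + d) \<le> n" using dd' by simp
      moreover have "1 + d \<le> n" using dd' by simp
      ultimately show ?thesis unfolding dk(2) using le_diff_conv2[of "1+d" n t] by (simp only: diff_diff_left)
    qed
    have Ek: "E \<le> k - t"
    proof -
      have "E + (1 + d + t) \<le> n" using dd' n1(3) by arith
      moreover have "1 + d + t \<le> n" using dd' by simp
      ultimately show ?thesis unfolding dk(2) using le_diff_conv2[of "1+d+t" n E] by (simp only: diff_diff_left)
    qed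
    have kk: "k = (k - t) + N * d" using tk unfolding t_def by simp
    have "\<rho>^k = \<rho>^((k - t) + N * d)" using kk by (rule arg_cong)
    also have "\<dots> = \<rho>^(k - t) * (\<rho>^N)^d" by (simp only: power_add power_mult)
    finally have "\<rho>^k = \<rho>^(k - t) * (\<rho>^N)^d" .
    then have "\<rho>^k * \<sigma>^d = \<rho>^(k - t) * (\<rho>^N * \<sigma>)^d" by (simp add: power_mult_distrib)
    also have "\<dots> \<le> \<rho>^(k - t) * 1"
      by (rule mult_left_mono) (use NS r s in \<open>auto intro: power_le_one\<close>)
    also have "\<dots> \<le> \<rho>^E" using Ek r by (simp add: power_decreasing)
    also have "\<dots> < \<eta>" by (rule E)
    finally show ?thesis unfolding dk(1) k_def .
  qed
  then show ?thesis by blast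
qed

definition Lstar :: "real \<Rightarrow> real \<Rightarrow> real" where
  "Lstar p q = (if q \<le> 1 - p then 0 else (q - (1 - p)) / p)"

locale setting =
  fixes p q :: real and Bs :: "nat \<Rightarrow> nat"
  assumes p: "1/2 < p" "p < 1"
    and B1: "\<And>n. n \<ge> 1 \<Longrightarrow> 1 \<le> Bs n \<and> Bs n \<le> n"
    and q: "0 \<le> q" "q \<le> 1"
    and lim: "(\<lambda>n. real (Bs n) / real n) \<longlonglongrightarrow> q"
begin

lemma lamP: "n \<ge> 1 \<Longrightarrow> Pb p (n-1) (Bs n - 1) (cf_lambda p (Bs n) n)"
  using lambda_P[of n "Bs n" p] B1[of n] p by auto

lemma km: "n \<ge> 1 \<Longrightarrow> Bs n - 1 \<le> n - 1"
  using B1[of n] by auto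

lemma lam01: "n \<ge> 1 \<Longrightarrow> 0 \<le> cf_lambda p (Bs n) n \<and> cf_lambda p (Bs n) n < 1"
  using lamP[of n] unfolding Pb_def by auto

lemma L_facts:
  shows "0 \<le> Lstar p q" "q \<le> 1 - p + p * Lstar p q"
    "\<not> q \<le> 1 - p \<Longrightarrow> 1 - p + p * Lstar p q = q"
  using p q by (auto simp: Lstar_def field_simps)

lemma upper:
  assumes a: "Lstar p q < a"
  shows "eventually (\<lambda>n. cf_lambda p (Bs n) n < a) sequentially"
proof (cases "1 \<le> Lstar p q + (a - Lstar p q)/2")
  case True
  show ?thesis unfolding eventually_sequentially
  proof (intro exI allI impI)
    fix n :: nat assume n1: "1 \<le> n"
    have "cf_lambda p (Bs n) n < 1" using lam01[OF n1] by simp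
    then show "cf_lambda p (Bs n) n < a" using True a by (simp add: field_simps)
  qed
next
  case False
  define L where "L = Lstar p q"
  define b where "b = L + (a - L)/2"
  define rF where "rF = 1 - p + p * b"
  define \<delta> where "\<delta> = p * (a - L) / 4"
  have b: "0 \<le> b" "b \<le> 1" "b < a" using False a L_facts(1) unfolding b_def L_def by (simp_all add: field_simps)
  have \<delta>: "0 < \<delta>" using a p unfolding \<delta>_def L_def by simp
  have rFq: "q + 2 * \<delta> \<le> rF"
  proof -
    have "rF = (1 - p + p * L) + p * (a - L) / 2" unfolding rF_def b_def by (simp add: algebra_simps)
    then show ?thesis using L_facts(2) unfolding \<delta>_def L_def by simp
  qed
  have rF01: "0 \<le> rF" "rF \<le> 1" using rng[OF p b(1,2)] unfolding rF_def by auto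
  obtain N1 where N1: "\<forall>n\<ge>N1. real (Bs n - 1) \<le> real (n-1) * (rF - \<delta>)"
    using ev_k_le[OF lim, of "rF - \<delta>"] rFq \<delta> by auto
  have eta: "0 < (2*p - 1) / p" using p by simp
  obtain N2 where N2: "\<forall>n\<ge>N2. exp (-2 * real (n-1) * \<delta>^2) < (2*p - 1) / p"
    using ev_exp[OF \<delta> eta] by blast
  show ?thesis unfolding eventually_sequentially
  proof (intro exI allI impI)
    fix n :: nat assume n: "max (max N1 N2) 2 \<le> n"
    define m where "m = n - 1"
    define k where "k = Bs n - 1"
    have m0: "0 < m" using n unfolding m_def by simp
    have n1: "1 \<le> n" using n by simp
    have "1 - exp (-2 * real m * \<delta>^2) \<le> Qb m k rF"
      by (rule Q_lower[OF m0 rF01]) (use \<delta> N1 n in \<open>auto simp: m_def k_def\<close>)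
    moreover have "exp (-2 * real m * \<delta>^2) < (2*p - 1) / p" unfolding m_def using N2 n by (meson max.bounded_iff)
    ultimately have "1 - (2*p - 1) / p < Qb m k rF" by linarith
    moreover have "1 - (2*p - 1) / p = (1 - p) / p" using p by (simp add: field_simps)
    ultimately have "(1 - p) / p < Qb m k rF" by simp
    then have QF: "1 - p < p * Qb m k rF" using p by (simp add: field_simps)
    have QT: "Qb m k (p + (1-p)*b) \<le> 1" by (rule Qb_le1) (use rng[OF p b(1,2)] in auto)
    have "(1-p) * Qb m k (p + (1-p)*b) \<le> 1 - p" using QT p by (simp add: mult_left_le)
    then have g: "gfun p m k b < 0" unfolding gfun_def using QF unfolding rF_def by simp
    have "cf_lambda p (Bs n) n \<le> b"
      by (rule Pb_U[OF _ p _ b(1,2) g]) (use km[OF n1] lamP[OF n1] in \<open>simp_all add: m_def k_def\<close>)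
    then show "cf_lambda p (Bs n) n < a" using b by simp
  qed
qed

lemma lower_q1:
  assumes a: "0 \<le> a" "a < 1" and q1: "q = 1"
  shows "eventually (\<lambda>n. a < cf_lambda p (Bs n) n) sequentially"
proof -
  define b where "b = (a + 1) / 2"
  have b: "0 \<le> b" "b \<le> 1" "b < 1" "a < b" using a unfolding b_def by auto
  define rF where "rF = 1 - p + p * b"
  define rT where "rT = p + (1-p) * b"
  have r: "0 < rF" "rF \<le> rT" "rT < 1" "rT \<le> 1"
    using rng[OF p b(1,2)] b(3) unfolding rF_def rT_def by auto
  have rlt: "rF < rT"
  proof -
    have "rT - rF = (2*p - 1) * (1 - b)" unfolding rT_def rF_def by (simp add: algebra_simps)
    moreover have "0 < (2*p - 1) * (1 - b)" using p b by simp
    ultimately show ?thesis by simp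
  qed
  define \<rho> where "\<rho> = rF / rT"
  define \<sigma> where "\<sigma> = (1 - rF) / (1 - rT)"
  have \<rho>: "0 < \<rho>" "\<rho> < 1" using r rlt unfolding \<rho>_def by auto
  have \<sigma>: "1 \<le> \<sigma>" using r rlt unfolding \<sigma>_def by simp
  have eta: "0 < (1 - p) / p" using p by simp
  have lim1: "(\<lambda>n. real (Bs n) / real n) \<longlonglongrightarrow> 1" using lim q1 by simp
  obtain N1 where N1: "\<forall>n\<ge>N1. \<rho>^(Bs n - 1) * \<sigma>^((n-1) - (Bs n - 1)) < (1 - p) / p"
    using ev_ratio[OF lim1 B1 \<rho> \<sigma> eta] by blast
  show ?thesis unfolding eventually_sequentially
  proof (intro exI allI impI)
    fix n :: nat assume n: "max N1 1 \<le> n"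
    define m where "m = n - 1"
    define k where "k = Bs n - 1"
    have n1: "1 \<le> n" using n by simp
    have QTp: "0 < Qb m k rT" by (rule Qb_pos) (use km[OF n1] r in \<open>auto simp: m_def k_def\<close>)
    define X where "X = \<rho>^k * \<sigma>^(m - k)"
    have X: "X < (1 - p) / p" using N1 n unfolding X_def m_def k_def by simp
    have QF: "Qb m k rF \<le> X * Qb m k rT"
      unfolding X_def \<rho>_def \<sigma>_def by (rule Q_ratio) (use r in auto)
    have "p * X < 1 - p" using X p by (simp add: field_simps)
    then have "p * X * Qb m k rT < (1 - p) * Qb m k rT" using QTp by simp
    moreover have "p * Qb m k rF \<le> p * X * Qb m k rT" using QF p by (simp add: mult.assoc)
    ultimately have g: "0 < gfun p m k b" unfolding gfun_def rF_def[symmetric] rT_def[symmetric] by simp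
    have "b < cf_lambda p (Bs n) n"
      by (rule Pb_L[OF _ p _ b(1,3) g]) (use km[OF n1] lamP[OF n1] in \<open>simp_all add: m_def k_def\<close>)
    then show "a < cf_lambda p (Bs n) n" using b by simp
  qed
qed

lemma lower_qlt1:
  assumes a: "0 \<le> a" "a < Lstar p q" and q1: "q < 1"
  shows "eventually (\<lambda>n. a < cf_lambda p (Bs n) n) sequentially"
proof -
  define L where "L = Lstar p q"
  have qp: "\<not> q \<le> 1 - p" using a L_facts(1) unfolding Lstar_def by (auto split: if_splits)
  have Lq: "1 - p + p * L = q" using L_facts(3)[OF qp] unfolding L_def .
  have L1: "L < 1"
  proof -
    have "p * L < p" using Lq q1 by simp
    then show ?thesis using p by simp
  qed
  define g where "g = (2*p - 1) * (1 - L) / (2*p)"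
  have g: "0 < g" using p L1 unfolding g_def by simp
  define b where "b = (max a (L - g) + L) / 2"
  have b: "a < b" "b < L" "L - g < b" using a g unfolding b_def L_def by auto
  have b01: "0 \<le> b" "b \<le> 1" "b < 1" using b a L1 by auto
  define rF where "rF = 1 - p + p * b"
  define rT where "rT = p + (1-p) * b"
  have rF01: "0 \<le> rF" "rF \<le> 1" and rT01: "0 \<le> rT" "rT \<le> 1"
    using rng[OF p b01(1,2)] unfolding rF_def rT_def by auto
  have rFq: "rF < q"
  proof -
    have "p * b < p * L" using b p by simp
    then show ?thesis using Lq unfolding rF_def by simp
  qed
  have rTq: "q < rT"
  proof -
    have e: "rT - q = (2*p - 1) * (1 - b) - p * (L - b)" unfolding rT_def Lq[symmetric] by (simp add: algebra_simps)
    have "(2*p - 1) * (1 - L) < (2*p - 1) * (1 - b)" using p b by simp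
    moreover have "p * (L - b) < p * g" using p b by simp
    moreover have "p * g = (2*p - 1) * (1 - L) / 2" unfolding g_def using p by simp
    moreover have "0 < (2*p - 1) * (1 - L)" using p L1 by simp
    ultimately show ?thesis using e by linarith
  qed
  define \<delta> where "\<delta> = (q - rF) / 2"
  define \<delta>' where "\<delta>' = (rT - q) / 2"
  have \<delta>: "0 < \<delta>" "0 < \<delta>'" using rFq rTq unfolding \<delta>_def \<delta>'_def by auto
  have c1: "rF + \<delta> < q" "0 \<le> rF + \<delta>" using rF01 \<delta> rFq unfolding \<delta>_def by (simp_all add: field_simps)
  have B1': "\<And>n. n \<ge> 1 \<Longrightarrow> 1 \<le> Bs n" using B1 by blast
  obtain N1 where N1: "\<forall>n\<ge>N1. real (n-1) * (rF + \<delta>) \<le> real (Bs n - 1)"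
    using ev_k_ge[OF lim c1 B1'] by blast
  obtain N2 where N2: "\<forall>n\<ge>N2. real (Bs n - 1) \<le> real (n-1) * (rT - \<delta>')"
  proof -
    have "q < rT - \<delta>'" using rTq unfolding \<delta>'_def by (simp add: field_simps)
    then show ?thesis using ev_k_le[OF lim, of "rT - \<delta>'"] that by blast
  qed
  have eta1: "0 < (1::real) / 2" by simp
  have eta2: "0 < (1 - p) / (2 * p)" using p by simp
  obtain N3 where N3: "\<forall>n\<ge>N3. exp (-2 * real (n-1) * \<delta>'^2) < 1/2" using ev_exp[OF \<delta>(2) eta1] by blast
  obtain N4 where N4: "\<forall>n\<ge>N4. exp (-2 * real (n-1) * \<delta>^2) < (1 - p) / (2 * p)" using ev_exp[OF \<delta>(1) eta2] by blast
  show ?thesis unfolding eventually_sequentially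
  proof (intro exI allI impI)
    fix n :: nat assume n: "max (max N1 N2) (max (max N3 N4) 2) \<le> n"
    define m where "m = n - 1"
    define k where "k = Bs n - 1"
    have n1: "1 \<le> n" and m0: "0 < m" using n unfolding m_def by auto
    have "Qb m k rF \<le> exp (-2 * real m * \<delta>^2)"
      by (rule Q_upper[OF m0 rF01]) (use \<delta> N1 n in \<open>auto simp: m_def k_def\<close>)
    also have "\<dots> < (1 - p) / (2 * p)" unfolding m_def using N4 n by (meson max.bounded_iff)
    finally have QF: "p * Qb m k rF < (1 - p) / 2" using p by (simp add: field_simps)
    have "1 - exp (-2 * real m * \<delta>'^2) \<le> Qb m k rT"
      by (rule Q_lower[OF m0 rT01]) (use \<delta> N2 n in \<open>auto simp: m_def k_def\<close>)
    moreover have "exp (-2 * real m * \<delta>'^2) < 1/2" unfolding m_def using N3 n by (meson max.bounded_iff)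
    ultimately have "1/2 < Qb m k rT" by linarith
    then have QT: "(1 - p) / 2 < (1 - p) * Qb m k rT" using p by simp
    have g: "0 < gfun p m k b" unfolding gfun_def rF_def[symmetric] rT_def[symmetric] using QF QT by simp
    have "b < cf_lambda p (Bs n) n"
      by (rule Pb_L[OF _ p _ b01(1,3) g]) (use km[OF n1] lamP[OF n1] in \<open>simp_all add: m_def k_def\<close>)
    then show "a < cf_lambda p (Bs n) n" using b by simp
  qed
qed

lemma lower:
  assumes a: "a < Lstar p q"
  shows "eventually (\<lambda>n. a < cf_lambda p (Bs n) n) sequentially"
proof (cases "a < 0")
  case True
  show ?thesis unfolding eventually_sequentially
  proof (intro exI allI impI)
    fix n :: nat assume n1: "1 \<le> n"
    have "0 \<le> cf_lambda p (Bs n) n" using lam01[OF n1] by simp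
    then show "a < cf_lambda p (Bs n) n" using True by linarith
  qed
next
  case False
  then have a0: "0 \<le> a" by simp
  show ?thesis
  proof (cases "q < 1")
    case True then show ?thesis by (rule lower_qlt1[OF a0 a])
  next
    case False
    then have q1: "q = 1" using q by simp
    have "Lstar p q = 1" unfolding Lstar_def q1 using p by simp
    then show ?thesis using lower_q1[OF a0 _ q1] a by simp
  qed
qed

lemma main: "(\<lambda>n. cf_lambda p (Bs n) n) \<longlonglongrightarrow> Lstar p q"
  by (rule order_tendstoI) (use upper lower in auto)

end

theorem lemma2:
  fixes p q :: real and Bs :: "nat \<Rightarrow> nat"
  assumes "1/2 < p" and "p < 1"
    and "\<And>n. n \<ge> 1 \<Longrightarrow> 1 \<le> Bs n \<and> Bs n \<le> n"
    and "0 \<le> q" and "q \<le> 1"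
    and "(\<lambda>n. real (Bs n) / real n) \<longlonglongrightarrow> q"
  shows "(\<lambda>n. cf_lambda p (Bs n) n) \<longlonglongrightarrow>
           (if q \<le> 1 - p then 0 else (q - (1 - p)) / p)"
proof -
  interpret setting p q Bs by unfold_locales (use assms in auto)
  show ?thesis using main unfolding Lstar_def .
qed

end
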